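(* Let $k\ge 2$, let $d$ be a positive integer and let $\epsilon>0$. Then with probability $1-o_n(1)$ (as $n\to\infty$) the following four properties hold for $T\sim\mathcal{R}(n,k)$: (Property 1) For all $1\le r<k$, all permutations $\pi$ of $V(T)$, all perfect $r$-sets $P$, all $R\subseteq P$ with $|R|\ge\epsilon n$ and all $S\subseteq A_{r+1}$ with $|S|\ge\epsilon n$, the event $X(T,\pi,P,R,S)$ does not occur. (Property 2) For all $1\le r<k$, all permutations $\pi$ of $V(T)$ and all $(S_1,\ldots,S_r)$ with $S_i\subseteq A_i$ and $|S_i|\ge n/18$, the event $Y(T,\pi,S_1,\ldots,S_r)$ does not occur. (Property 3) For all $1\le r<k$, all $r<t\le k$, all $\hat W=(W_1,\ldots,W_d)$ with $W_i\in\{+,-\}^r$ and all $\hat p=(p_1,\ldots,p_d)$ where the $p_j=(a_{j,1},\ldots,a_{j,r})$ are pairwise disjoint with $a_{j,i}\in A_i$, it holds that $|I_{\hat W}(\hat p,t)|\le n(1-1/2^r)^d+n^{2/3}$. (Property 4) For all $1\le s\le k$, all $1\le \ell\le k$, all sequences $A'=(v_1,\ldots,v_q)$ of $q\le d$ distinct elements of $A_\ell$ and all $D\in\{+,-\}^q$, it holds that $|C_D(A')\cap A_s|\le n(1/2)^q+n^{2/3}$.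
   Context: $\mathcal{R}(n,k)$ is the probability space of $k$-partite tournaments with vertex classes $A_1,\ldots,A_k$ of size $n$ each, every edge between distinct classes oriented independently and uniformly at random. For a permutation (bijection) $\pi:V(T)\to\{1,\ldots,kn\}$, $L_\pi(T)$ is the spanning subgraph of $T$ consisting of all edges $(u,v)\in E(T)$ with $\pi(u)<\pi(v)$, viewed as undirected. A perfect $r$-set is a set $P$ of $n$ pairwise disjoint $r$-tuples $(a_1,\ldots,a_r)$ with $a_i\in A_i$. $L_\pi(P,T)$ is the bipartite graph with parts $P$ and $A_{r+1}$ in which $p=(a_1,\ldots,a_r)$ and $v\in A_{r+1}$ are adjacent iff $\{v,a_i\}\in E(L_\pi(T))$ for all $i$. $X(T,\pi,P,R,S)$ is the event that $L_\pi(P,T)$ has fewer than $|R||S|/2^{r+1}$ edges between $R$ and $S$. An $r$-clique $\{v_1,\ldots,v_r\}$ of $L_\pi(T)$ with $v_i\in A_i$ is friendly if for every $r<t\le k$ and every $1\le r'\le r$, $v_1,\ldots,v_{r'}$ have at least $n/2^{r'+1}$ common neighbors in $A_t$ in $L_\pi(T)$. $Y(T,\pi,S_1,\ldots,S_r)$ is the event that there are fewer than $0.5(1/18)^rn^r2^{-\binom r2}$ friendly $r$-cliques $\{v_1,\ldots,v_r\}$ of $L_\pi(T)$ with $v_i\in S_i$. A vertex $v\in A_t$ is $W$-inconsistent with $p=(a_1,\ldots,a_r)$ ($W\in\{+,-\}^r$) unless for every $i$, $(v,a_i)\in E(T)\iff W(i)=+$; $I_{\hat W}(\hat p,t)$ is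 the set of $v\in A_t$ that are $W_i$-inconsistent with $p_i$ for all $i=1,\ldots,d$. For $D\in\{+,-\}^q$ and $A'=(v_1,\ldots,v_q)$, $C_D(A')$ is the set of vertices $w$ such that for each $j$, $(v_j,w)\in E(T)$ if $D(j)=+$ and $(w,v_j)\in E(T)$ if $D(j)=-$. *)

theory Defs
  imports Complex_Main
begin

text \<open>Vertices are pairs (i,j): class index i in {1..k}, position j in {0..<n}.
  Class A_i = {i} x {0..<n}. A tournament is given by its set E of directed edges
  (u,v) meaning u -> v.\<close>

definition cls :: "nat \<Rightarrow> nat \<Rightarrow> (nat \<times> nat) set" where
  "cls n i = {i} \<times> {0..<n}"

definition Vset :: "nat \<Rightarrow> nat \<Rightarrow> (nat \<times> nat) set" where
  "Vset n k = {1..k} \<times> {0..<n}"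

definition cross_pairs :: "nat \<Rightarrow> nat \<Rightarrow> ((nat \<times> nat) \<times> (nat \<times> nat)) set" where
  "cross_pairs n k = {(u,v). u \<in> Vset n k \<and> v \<in> Vset n k \<and> fst u \<noteq> fst v}"

text \<open>All k-partite tournaments with classes of size n (uniform distribution = R(n,k)).\<close>
definition tournaments :: "nat \<Rightarrow> nat \<Rightarrow> ((nat \<times> nat) \<times> (nat \<times> nat)) set set" where
  "tournaments n k = {E. E \<subseteq> cross_pairs n k \<and>
     (\<forall>(u,v) \<in> cross_pairs n k. ((u,v) \<in> E) \<noteq> ((v,u) \<in> E))}"

definition Lpi :: "((nat \<times> nat) \<times> (nat \<times> nat)) set \<Rightarrow> (nat \<times> nat \<Rightarrow> nat)
    \<Rightarrow> nat \<times> nat \<Rightarrow> nat \<times> nat \<Rightarrow> bool" where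
  "Lpi E \<pi> u v \<longleftrightarrow> ((u,v) \<in> E \<and> \<pi> u < \<pi> v) \<or> ((v,u) \<in> E \<and> \<pi> v < \<pi> u)"

text \<open>r-tuples (a_1,...,a_r) are lists of length r with entry i-1 in A_i.\<close>
definition rtuple :: "nat \<Rightarrow> nat \<Rightarrow> (nat \<times> nat) list \<Rightarrow> bool" where
  "rtuple n r p \<longleftrightarrow> length p = r \<and> (\<forall>i<r. p ! i \<in> cls n (i+1))"

definition perfect_rset :: "nat \<Rightarrow> nat \<Rightarrow> (nat \<times> nat) list set \<Rightarrow> bool" where
  "perfect_rset n r P \<longleftrightarrow> card P = n \<and> (\<forall>p\<in>P. rtuple n r p) \<and>
     (\<forall>p\<in>P. \<forall>q\<in>P. p \<noteq> q \<longrightarrow> set p \<inter> set q = {})"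

definition LP_adj :: "((nat \<times> nat) \<times> (nat \<times> nat)) set \<Rightarrow> (nat \<times> nat \<Rightarrow> nat)
    \<Rightarrow> (nat \<times> nat) list \<Rightarrow> nat \<times> nat \<Rightarrow> bool" where
  "LP_adj E \<pi> p v \<longleftrightarrow> (\<forall>i<length p. Lpi E \<pi> v (p ! i))"

definition X_event :: "nat \<Rightarrow> ((nat \<times> nat) \<times> (nat \<times> nat)) set \<Rightarrow> (nat \<times> nat \<Rightarrow> nat)
    \<Rightarrow> (nat \<times> nat) list set \<Rightarrow> (nat \<times> nat) list set \<Rightarrow> (nat \<times> nat) set \<Rightarrow> bool" where
  "X_event r E \<pi> P R S \<longleftrightarrow>
     real (card {(p,v). p \<in> R \<and> v \<in> S \<and> LP_adj E \<pi> p v})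
       < real (card R) * real (card S) / 2 ^ (r+1)"

definition friendly :: "nat \<Rightarrow> nat \<Rightarrow> nat \<Rightarrow> ((nat \<times> nat) \<times> (nat \<times> nat)) set
    \<Rightarrow> (nat \<times> nat \<Rightarrow> nat) \<Rightarrow> (nat \<times> nat) list \<Rightarrow> bool" where
  "friendly n k r E \<pi> vs \<longleftrightarrow> rtuple n r vs \<and>
     (\<forall>i<r. \<forall>j<r. i \<noteq> j \<longrightarrow> Lpi E \<pi> (vs ! i) (vs ! j)) \<and>
     (\<forall>t. r < t \<and> t \<le> k \<longrightarrow> (\<forall>r'. 1 \<le> r' \<and> r' \<le> r \<longrightarrow>
        real (card {w \<in> cls n t. \<forall>i<r'. Lpi E \<pi> w (vs ! i)}) \<ge> real n / 2 ^ (r'+1)))"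

definition Y_event :: "nat \<Rightarrow> nat \<Rightarrow> nat \<Rightarrow> ((nat \<times> nat) \<times> (nat \<times> nat)) set
    \<Rightarrow> (nat \<times> nat \<Rightarrow> nat) \<Rightarrow> (nat \<Rightarrow> (nat \<times> nat) set) \<Rightarrow> bool" where
  "Y_event n k r E \<pi> S \<longleftrightarrow>
     real (card {vs. friendly n k r E \<pi> vs \<and> (\<forall>i<r. vs ! i \<in> S (i+1))})
       < 0.5 * (1/18) ^ r * real n ^ r / 2 ^ (r choose 2)"

text \<open>W given as a bool list (True = +). v is W-inconsistent with p unless
  for every i, (v,a_i) in E iff W(i) = +.\<close>
definition inconsistent :: "((nat \<times> nat) \<times> (nat \<times> nat)) set \<Rightarrow> bool list
    \<Rightarrow> (nat \<times> nat) list \<Rightarrow> nat \<times> nat \<Rightarrow> bool" where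
  "inconsistent E W p v \<longleftrightarrow> \<not> (\<forall>i<length p. ((v, p ! i) \<in> E) \<longleftrightarrow> W ! i)"

definition I_set :: "nat \<Rightarrow> ((nat \<times> nat) \<times> (nat \<times> nat)) set \<Rightarrow> bool list list
    \<Rightarrow> (nat \<times> nat) list list \<Rightarrow> nat \<Rightarrow> (nat \<times> nat) set" where
  "I_set n E Ws ps t = {v \<in> cls n t. \<forall>j<length ps. inconsistent E (Ws ! j) (ps ! j) v}"

definition C_D :: "((nat \<times> nat) \<times> (nat \<times> nat)) set \<Rightarrow> bool list
    \<Rightarrow> (nat \<times> nat) list \<Rightarrow> (nat \<times> nat) set" where
  "C_D E D vs = {w. \<forall>j<length vs. (D ! j \<longrightarrow> (vs ! j, w) \<in> E) \<and> (\<not> D ! j \<longrightarrow> (w, vs ! j) \<in> E)}"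

definition prop1 :: "nat \<Rightarrow> nat \<Rightarrow> real \<Rightarrow> ((nat \<times> nat) \<times> (nat \<times> nat)) set \<Rightarrow> bool" where
  "prop1 n k \<epsilon> E \<longleftrightarrow> (\<forall>r \<pi> P R S. 1 \<le> r \<and> r < k \<and> bij_betw \<pi> (Vset n k) {1..k*n}
      \<and> perfect_rset n r P \<and> R \<subseteq> P \<and> real (card R) \<ge> \<epsilon> * n
      \<and> S \<subseteq> cls n (r+1) \<and> real (card S) \<ge> \<epsilon> * n
      \<longrightarrow> \<not> X_event r E \<pi> P R S)"

definition prop2 :: "nat \<Rightarrow> nat \<Rightarrow> ((nat \<times> nat) \<times> (nat \<times> nat)) set \<Rightarrow> bool" where
  "prop2 n k E \<longleftrightarrow> (\<forall>r \<pi> S. 1 \<le> r \<and> r < k \<and> bij_betw \<pi> (Vset n k) {1..k*n}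
      \<and> (\<forall>i. 1 \<le> i \<and> i \<le> r \<longrightarrow> S i \<subseteq> cls n i \<and> real (card (S i)) \<ge> real n / 18)
      \<longrightarrow> \<not> Y_event n k r E \<pi> S)"

definition prop3 :: "nat \<Rightarrow> nat \<Rightarrow> nat \<Rightarrow> ((nat \<times> nat) \<times> (nat \<times> nat)) set \<Rightarrow> bool" where
  "prop3 n k d E \<longleftrightarrow> (\<forall>r t Ws ps. 1 \<le> r \<and> r < k \<and> r < t \<and> t \<le> k
      \<and> length Ws = d \<and> (\<forall>W \<in> set Ws. length W = r)
      \<and> length ps = d \<and> (\<forall>p \<in> set ps. rtuple n r p)
      \<and> (\<forall>j<d. \<forall>j'<d. j \<noteq> j' \<longrightarrow> set (ps ! j) \<inter> set (ps ! j') = {})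
      \<longrightarrow> real (card (I_set n E Ws ps t)) \<le> real n * (1 - 1/2^r) ^ d + real n powr (2/3))"

definition prop4 :: "nat \<Rightarrow> nat \<Rightarrow> nat \<Rightarrow> ((nat \<times> nat) \<times> (nat \<times> nat)) set \<Rightarrow> bool" where
  "prop4 n k d E \<longleftrightarrow> (\<forall>s l vs D. 1 \<le> s \<and> s \<le> k \<and> 1 \<le> l \<and> l \<le> k
      \<and> length vs \<le> d \<and> distinct vs \<and> set vs \<subseteq> cls n l \<and> length D = length vs
      \<longrightarrow> real (card (C_D E D vs \<inter> cls n s))
            \<le> real n * (1/2) ^ length vs + real n powr (2/3))"

definition good :: "nat \<Rightarrow> nat \<Rightarrow> nat \<Rightarrow> real \<Rightarrow> ((nat \<times> nat) \<times> (nat \<times> nat)) set \<Rightarrow> bool" where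
  "good n k d \<epsilon> E \<longleftrightarrow> prop1 n k \<epsilon> E \<and> prop2 n k E \<and> prop3 n k d E \<and> prop4 n k d E"

end

theory Submission
  imports Defs "HOL-Probability.Probability" "HOL-Real_Asymp.Real_Asymp"
begin

definition coin :: "bool pmf" where "coin = pmf_of_set UNIV"
definition Om :: "'a set \<Rightarrow> ('a \<Rightarrow> bool) pmf" where "Om D = Pi_pmf D False (\<lambda>_. coin)"

lemma sets_PiM_bool_all:
  fixes K :: "'a set"
  assumes "finite K" and "X \<subseteq> space (PiM K (\<lambda>_. count_space (UNIV::bool set)))"
  shows "X \<in> sets (PiM K (\<lambda>_. count_space (UNIV::bool set)))"
proof -
  have sp: "space (PiM K (\<lambda>_. count_space (UNIV::bool set))) = PiE K (\<lambda>_. UNIV)"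
    by (simp add: space_PiM)
  have fin: "finite (PiE K (\<lambda>_. (UNIV::bool set)))" using assms(1) by (simp add: finite_PiE)
  have X: "X = (\<Union>f\<in>X. {f})" by auto
  have "\<And>f. f \<in> X \<Longrightarrow> {f} \<in> sets (PiM K (\<lambda>_. count_space (UNIV::bool set)))"
  proof -
    fix f assume "f \<in> X"
    then have f: "f \<in> PiE K (\<lambda>_. UNIV)" using assms(2) sp by auto
    have "{f} = PiE K (\<lambda>i. {f i})" using f
      by (auto simp: PiE_def extensional_def Pi_def)
    also have "\<dots> \<in> sets (PiM K (\<lambda>_. count_space (UNIV::bool set)))"
      by (rule sets_PiM_I_finite) (use assms(1) in auto)
    finally show "{f} \<in> sets (PiM K (\<lambda>_. count_space (UNIV::bool set)))" .
  qed
  moreover have "finite X" using assms(2) sp fin finite_subset by auto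
  ultimately show ?thesis
    by (subst X) (intro sets.finite_UN, auto)
qed

lemma measurable_PiM_bool_all:
  fixes K :: "'a set"
  assumes "finite K" and "h \<in> space (PiM K (\<lambda>_. count_space (UNIV::bool set))) \<rightarrow> space N"
  shows "h \<in> measurable (PiM K (\<lambda>_. count_space (UNIV::bool set))) N"
  using assms by (intro measurableI) (auto intro!: sets_PiM_bool_all)

lemma indep_blocks:
  fixes D :: "'a set" and K :: "'j \<Rightarrow> 'a set"
  assumes "finite D" "\<And>j. j \<in> J \<Longrightarrow> K j \<subseteq> D" "disjoint_family_on K J"
    and "\<And>j. j \<in> J \<Longrightarrow> h j \<in> space (PiM (K j) (\<lambda>_. count_space (UNIV::bool set))) \<rightarrow> space (N j)"
  shows "prob_space.indep_vars (measure_pmf (Om D)) N (\<lambda>j \<omega>. h j (restrict \<omega> (K j))) J"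
proof -
  interpret P: prob_space "measure_pmf (Om D)" by (rule measure_pmf.prob_space_axioms)
  have i0: "prob_space.indep_vars (measure_pmf (Om D)) (\<lambda>_. count_space UNIV) (\<lambda>x f. f x) D"
    unfolding Om_def by (rule indep_vars_Pi_pmf) (rule assms(1))
  have i1: "prob_space.indep_vars (measure_pmf (Om D)) (\<lambda>j. PiM (K j) (\<lambda>_. count_space (UNIV::bool set)))
      (\<lambda>j \<omega>. restrict (\<lambda>i. \<omega> i) (K j)) J"
    by (rule prob_space.indep_vars_restrict[OF measure_pmf.prob_space_axioms i0]) (use assms in auto)
  have fK: "\<And>j. j \<in> J \<Longrightarrow> finite (K j)" using assms(1,2) finite_subset by blast
  show ?thesis
    using prob_space.indep_vars_compose2[OF measure_pmf.prob_space_axioms i1, of h N] measurable_PiM_bool_all[OF fK assms(4)]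
    by simp
qed

lemma prob_Om_agree:
  fixes D :: "'a set"
  assumes "finite D" "B \<subseteq> D"
  shows "measure_pmf.prob (Om D) {\<omega>. \<forall>x\<in>B. \<omega> x = b x} = (1/2) ^ card B"
proof -
  let ?S = "{\<omega>. \<forall>x\<in>B. \<omega> x = b x}"
  let ?P = "PiE_dflt D False (\<lambda>x. if x \<in> B then {b x} else UNIV)"
  have sp: "set_pmf (Om D) = PiE_dflt D False (\<lambda>_. UNIV)"
    unfolding Om_def using assms(1) by (simp add: set_Pi_pmf coin_def o_def)
  have "measure_pmf.prob (Om D) ?S = measure_pmf.prob (Om D) (?S \<inter> set_pmf (Om D))"
    by (simp add: measure_Int_set_pmf)
  also have "?S \<inter> set_pmf (Om D) = ?P"
    unfolding sp using assms(2) by (auto simp: PiE_dflt_def)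
  also have "measure_pmf.prob (Om D) ?P = (\<Prod>x\<in>D. measure_pmf.prob coin (if x \<in> B then {b x} else UNIV))"
    unfolding Om_def by (rule measure_Pi_pmf_PiE_dflt) (rule assms(1))
  also have "\<dots> = (\<Prod>x\<in>D. if x \<in> B then 1/2 else 1)"
    by (intro prod.cong refl) (simp add: coin_def measure_pmf_of_set)
  also have "\<dots> = (1/2) ^ card B"
    using assms by (simp add: prod.If_cases Int_absorb1)
  finally show ?thesis .
qed

definition local_to :: "'a set \<Rightarrow> (('a \<Rightarrow> bool) \<Rightarrow> 'b) \<Rightarrow> bool" where
  "local_to K Q \<longleftrightarrow> (\<forall>\<omega> \<omega>'. (\<forall>x\<in>K. \<omega> x = \<omega>' x) \<longrightarrow> Q \<omega> = Q \<omega>')"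

lemma local_to_restrict:
  assumes "local_to K Q"
  shows "Q \<omega> = (\<lambda>f. Q (\<lambda>x. if x \<in> K then f x else False)) (restrict \<omega> K)"
  using assms unfolding local_to_def by (auto simp: restrict_def)

lemma local_to_comp: "local_to K Q \<Longrightarrow> local_to K (\<lambda>\<omega>. f (Q \<omega>))"
  unfolding local_to_def by metis

lemma indep_local:
  fixes D :: "'a set" and K :: "'j \<Rightarrow> 'a set"
  assumes "finite D" "\<And>j. j \<in> J \<Longrightarrow> K j \<subseteq> D" "disjoint_family_on K J"
    and "\<And>j. j \<in> J \<Longrightarrow> local_to (K j) (Q j)"
    and "\<And>j. j \<in> J \<Longrightarrow> Q j \<in> UNIV \<rightarrow> space (N j)"
  shows "prob_space.indep_vars (measure_pmf (Om D)) N Q J"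
proof -
  interpret P: prob_space "measure_pmf (Om D)" by (rule measure_pmf.prob_space_axioms)
  have "prob_space.indep_vars (measure_pmf (Om D)) N (\<lambda>j \<omega>. (\<lambda>f. Q j (\<lambda>x. if x \<in> K j then f x else False)) (restrict \<omega> (K j))) J"
    by (rule indep_blocks) (use assms in \<open>auto simp: Pi_iff\<close>)
  moreover have "\<And>j \<omega>. j \<in> J \<Longrightarrow> (\<lambda>f. Q j (\<lambda>x. if x \<in> K j then f x else False)) (restrict \<omega> (K j)) = Q j \<omega>"
    using local_to_restrict assms(4) by metis
  ultimately show ?thesis
    using prob_space.indep_vars_cong[OF measure_pmf.prob_space_axioms, of J J
       "\<lambda>j \<omega>. (\<lambda>f. Q j (\<lambda>x. if x \<in> K j then f x else False)) (restrict \<omega> (K j))" Q N N]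
    by (auto simp: fun_eq_iff)
qed

lemma expectation_of_bool_Om:
  "measure_pmf.expectation (Om D) (\<lambda>\<omega>. of_bool (Q \<omega>) :: real) = measure_pmf.prob (Om D) {\<omega>. Q \<omega>}"
proof -
  have "(\<lambda>\<omega>. of_bool (Q \<omega>) :: real) = indicator {\<omega>. Q \<omega>}" by (auto simp: fun_eq_iff indicator_def)
  then show ?thesis by simp
qed

lemma hoeff_setup:
  fixes D :: "'a set" and J :: "'j set" and K :: "'j \<Rightarrow> 'a set"
  assumes "finite D" "finite J" "\<And>j. j \<in> J \<Longrightarrow> K j \<subseteq> D" "disjoint_family_on K J"
    and "\<And>j. j \<in> J \<Longrightarrow> local_to (K j) (Q j)"
  shows "indep_interval_bounded_random_variables (measure_pmf (Om D)) J (\<lambda>j \<omega>. of_bool (Q j \<omega>)) (\<lambda>_. 0) (\<lambda>_. 1)"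
proof -
  have ind: "prob_space.indep_vars (measure_pmf (Om D)) (\<lambda>_. borel) (\<lambda>j \<omega>. of_bool (Q j \<omega>) :: real) J"
    by (rule indep_local[where K=K]) (use assms in \<open>auto intro: local_to_comp\<close>)
  show ?thesis
    unfolding indep_interval_bounded_random_variables_def
      indep_interval_bounded_random_variables_axioms_def
    by (auto simp: measure_pmf.prob_space_axioms assms(2) ind expectation_of_bool_Om)
qed

lemma hoeff_upper:
  fixes D :: "'a set" and J :: "'j set" and K :: "'j \<Rightarrow> 'a set"
  assumes "finite D" "finite J" "J \<noteq> {}" "\<And>j. j \<in> J \<Longrightarrow> K j \<subseteq> D" "disjoint_family_on K J"
    and "\<And>j. j \<in> J \<Longrightarrow> local_to (K j) (Q j)"
    and "\<And>j. j \<in> J \<Longrightarrow> measure_pmf.prob (Om D) {\<omega>. Q j \<omega>} \<le> q" and "a \<ge> 0"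
  shows "measure_pmf.prob (Om D) {\<omega>. q * card J + a \<le> real (card {j\<in>J. Q j \<omega>})}
          \<le> exp (- 2 * a\<^sup>2 / card J)"
proof -
  have hs: "indep_interval_bounded_random_variables (measure_pmf (Om D)) J (\<lambda>j \<omega>. of_bool (Q j \<omega>)) (\<lambda>_. 0) (\<lambda>_. 1)"
    by (rule hoeff_setup) (use assms in auto)
  interpret H: Hoeffding_ineq "measure_pmf (Om D)" J "\<lambda>j \<omega>. of_bool (Q j \<omega>)" "\<lambda>_. 0" "\<lambda>_. 1"
     "\<Sum>j\<in>J. measure_pmf.prob (Om D) {\<omega>. Q j \<omega>}"
    unfolding Hoeffding_ineq_def by (simp_all add: hs expectation_of_bool_Om)
  have mu: "(\<Sum>j\<in>J. measure_pmf.prob (Om D) {\<omega>. Q j \<omega>}) \<le> q * card J"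
    using sum_mono[of J "\<lambda>j. measure_pmf.prob (Om D) {\<omega>. Q j \<omega>}" "\<lambda>_. q"] assms(7) by (auto simp: mult.commute)
  have cJ: "card J > 0" using assms(2,3) by (simp add: card_gt_0_iff)
  have "{\<omega>. q * card J + a \<le> real (card {j\<in>J. Q j \<omega>})} \<subseteq>
        {x \<in> space (measure_pmf (Om D)). (\<Sum>j\<in>J. measure_pmf.prob (Om D) {\<omega>. Q j \<omega>}) + a \<le> (\<Sum>i\<in>J. of_bool (Q i x))}"
    using mu assms(2) by (auto simp: Int_def)
  then have "measure_pmf.prob (Om D) {\<omega>. q * card J + a \<le> real (card {j\<in>J. Q j \<omega>})} \<le>
     measure_pmf.prob (Om D) {x \<in> space (measure_pmf (Om D)). (\<Sum>j\<in>J. measure_pmf.prob (Om D) {\<omega>. Q j \<omega>}) + a \<le> (\<Sum>i\<in>J. of_bool (Q i x))}"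
    by (intro measure_pmf.finite_measure_mono) auto
  also have "\<dots> \<le> exp (- 2 * a\<^sup>2 / (\<Sum>i\<in>J. (1 - 0)\<^sup>2))"
    by (rule H.Hoeffding_ineq_ge) (use assms cJ in auto)
  finally show ?thesis by simp
qed

lemma hoeff_lower:
  fixes D :: "'a set" and J :: "'j set" and K :: "'j \<Rightarrow> 'a set"
  assumes "finite D" "finite J" "J \<noteq> {}" "\<And>j. j \<in> J \<Longrightarrow> K j \<subseteq> D" "disjoint_family_on K J"
    and "\<And>j. j \<in> J \<Longrightarrow> local_to (K j) (Q j)"
    and "\<And>j. j \<in> J \<Longrightarrow> measure_pmf.prob (Om D) {\<omega>. Q j \<omega>} \<ge> q" and "a \<ge> 0"
  shows "measure_pmf.prob (Om D) {\<omega>. real (card {j\<in>J. Q j \<omega>}) \<le> q * card J - a}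
          \<le> exp (- 2 * a\<^sup>2 / card J)"
proof -
  have hs: "indep_interval_bounded_random_variables (measure_pmf (Om D)) J (\<lambda>j \<omega>. of_bool (Q j \<omega>)) (\<lambda>_. 0) (\<lambda>_. 1)"
    by (rule hoeff_setup) (use assms in auto)
  interpret H: Hoeffding_ineq "measure_pmf (Om D)" J "\<lambda>j \<omega>. of_bool (Q j \<omega>)" "\<lambda>_. 0" "\<lambda>_. 1"
     "\<Sum>j\<in>J. measure_pmf.prob (Om D) {\<omega>. Q j \<omega>}"
    unfolding Hoeffding_ineq_def by (simp_all add: hs expectation_of_bool_Om)
  have mu: "(\<Sum>j\<in>J. measure_pmf.prob (Om D) {\<omega>. Q j \<omega>}) \<ge> q * card J"
    using sum_mono[of J "\<lambda>_. q" "\<lambda>j. measure_pmf.prob (Om D) {\<omega>. Q j \<omega>}"] assms(7) by (auto simp: mult.commute)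
  have cJ: "card J > 0" using assms(2,3) by (simp add: card_gt_0_iff)
  have "{\<omega>. real (card {j\<in>J. Q j \<omega>}) \<le> q * card J - a} \<subseteq>
        {x \<in> space (measure_pmf (Om D)). (\<Sum>i\<in>J. of_bool (Q i x)) \<le> (\<Sum>j\<in>J. measure_pmf.prob (Om D) {\<omega>. Q j \<omega>}) - a}"
    using mu assms(2) by (auto simp: Int_def)
  then have "measure_pmf.prob (Om D) {\<omega>. real (card {j\<in>J. Q j \<omega>}) \<le> q * card J - a} \<le>
     measure_pmf.prob (Om D) {x \<in> space (measure_pmf (Om D)). (\<Sum>i\<in>J. of_bool (Q i x)) \<le> (\<Sum>j\<in>J. measure_pmf.prob (Om D) {\<omega>. Q j \<omega>}) - a}"
    by (intro measure_pmf.finite_measure_mono) auto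
  also have "\<dots> \<le> exp (- 2 * a\<^sup>2 / (\<Sum>i\<in>J. (1 - 0)\<^sup>2))"
    by (rule H.Hoeffding_ineq_le) (use assms cJ in auto)
  finally show ?thesis by simp
qed

lemma prob_Om_indep_all:
  fixes D :: "'a set" and J :: "'j set" and K :: "'j \<Rightarrow> 'a set"
  assumes "finite D" "finite J" "\<And>j. j \<in> J \<Longrightarrow> K j \<subseteq> D" "disjoint_family_on K J"
    and "\<And>j. j \<in> J \<Longrightarrow> local_to (K j) (Q j)"
  shows "measure_pmf.prob (Om D) {\<omega>. \<forall>j\<in>J. Q j \<omega>} = (\<Prod>j\<in>J. measure_pmf.prob (Om D) {\<omega>. Q j \<omega>})"
proof (cases "J = {}")
  case True then show ?thesis by simp
next
  case False
  have ind: "prob_space.indep_vars (measure_pmf (Om D)) (\<lambda>_. count_space UNIV) Q J"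
    by (rule indep_local[where K=K]) (use assms in auto)
  have "measure_pmf.prob (Om D) (\<Inter>j\<in>J. Q j -` {True} \<inter> space (measure_pmf (Om D))) =
        (\<Prod>j\<in>J. measure_pmf.prob (Om D) (Q j -` {True} \<inter> space (measure_pmf (Om D))))"
    by (rule prob_space.indep_varsD_finite[OF measure_pmf.prob_space_axioms ind False assms(2)]) auto
  moreover have "(\<Inter>j\<in>J. Q j -` {True} \<inter> space (measure_pmf (Om D))) = {\<omega>. \<forall>j\<in>J. Q j \<omega>}"
    using False by auto
  moreover have "\<And>j. Q j -` {True} \<inter> space (measure_pmf (Om D)) = {\<omega>. Q j \<omega>}" by auto
  ultimately show ?thesis by simp
qed

section \<open>Tournaments as coin flips\<close>

definition Dk :: "nat \<Rightarrow> nat \<Rightarrow> ((nat \<times> nat) \<times> (nat \<times> nat)) set" where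
  "Dk n k = {e \<in> cross_pairs n k. fst (fst e) < fst (snd e)}"

definition tour :: "nat \<Rightarrow> nat \<Rightarrow> (((nat \<times> nat) \<times> (nat \<times> nat)) \<Rightarrow> bool) \<Rightarrow> ((nat \<times> nat) \<times> (nat \<times> nat)) set" where
  "tour n k \<omega> = {(u,v) \<in> cross_pairs n k. if fst u < fst v then \<omega> (u,v) else \<not> \<omega> (v,u)}"

definition ekey :: "nat \<times> nat \<Rightarrow> nat \<times> nat \<Rightarrow> (nat \<times> nat) \<times> (nat \<times> nat)" where
  "ekey u v = (if fst u < fst v then (u,v) else (v,u))"

lemma finite_Vset [simp]: "finite (Vset n k)"
  by (simp add: Vset_def)

lemma finite_cross_pairs [simp]: "finite (cross_pairs n k)"
proof -
  have "cross_pairs n k \<subseteq> Vset n k \<times> Vset n k" by (auto simp: cross_pairs_def)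
  then show ?thesis by (rule finite_subset) simp
qed

lemma finite_Dk [simp]: "finite (Dk n k)"
  unfolding Dk_def by simp

lemma card_Vset: "card (Vset n k) = k * n"
  by (simp add: Vset_def card_cartesian_product)

lemma tour_bij: "bij_betw (tour n k) (PiE_dflt (Dk n k) False (\<lambda>_. UNIV)) (tournaments n k)"
proof (rule bij_betw_imageI)
  show "inj_on (tour n k) (PiE_dflt (Dk n k) False (\<lambda>_. UNIV))"
  proof (rule inj_onI)
    fix \<omega> \<omega>' assume a: "\<omega> \<in> PiE_dflt (Dk n k) False (\<lambda>_. UNIV)" "\<omega>' \<in> PiE_dflt (Dk n k) False (\<lambda>_. UNIV)"
      and e: "tour n k \<omega> = tour n k \<omega>'"
    show "\<omega> = \<omega>'"
    proof
      fix x show "\<omega> x = \<omega>' x"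
      proof (cases "x \<in> Dk n k")
        case True
        obtain u v where x: "x = (u,v)" by (cases x)
        have "(x \<in> tour n k \<omega>) = \<omega> x" "(x \<in> tour n k \<omega>') = \<omega>' x"
          using True by (auto simp: tour_def Dk_def x)
        then show ?thesis using e by simp
      next
        case False then show ?thesis using a unfolding PiE_dflt_def by blast
      qed
    qed
  qed
next
  show "tour n k ` PiE_dflt (Dk n k) False (\<lambda>_. UNIV) = tournaments n k"
  proof
    show "tour n k ` PiE_dflt (Dk n k) False (\<lambda>_. UNIV) \<subseteq> tournaments n k"
      by (auto simp: tournaments_def tour_def cross_pairs_def)
  next
    show "tournaments n k \<subseteq> tour n k ` PiE_dflt (Dk n k) False (\<lambda>_. UNIV)"
    proof
      fix E assume E: "E \<in> tournaments n k"
      define \<omega> where "\<omega> = (\<lambda>e. e \<in> Dk n k \<and> e \<in> E)"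
      have "\<omega> \<in> PiE_dflt (Dk n k) False (\<lambda>_. UNIV)" by (simp add: PiE_dflt_def \<omega>_def)
      moreover have "tour n k \<omega> = E"
      proof
        show "tour n k \<omega> \<subseteq> E"
        proof
          fix e assume "e \<in> tour n k \<omega>"
          then obtain u v where e: "e = (u,v)" "(u,v) \<in> cross_pairs n k"
             "if fst u < fst v then \<omega> (u,v) else \<not> \<omega> (v,u)" by (auto simp: tour_def)
          have vu: "(v,u) \<in> cross_pairs n k" using e(2) by (auto simp: cross_pairs_def)
          show "e \<in> E"
          proof (cases "fst u < fst v")
            case True then show ?thesis using e by (simp add: \<omega>_def)
          next
            case False
            then have "fst v < fst u" using e(2) by (auto simp: cross_pairs_def)
            then have "(v,u) \<in> Dk n k" using vu by (simp add: Dk_def)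
            then have "(v,u) \<notin> E" using e False by (simp add: \<omega>_def)
            then show ?thesis using E e(1,2) unfolding tournaments_def by auto
          qed
        qed
      next
        show "E \<subseteq> tour n k \<omega>"
        proof
          fix e assume eE: "e \<in> E"
          obtain u v where e: "e = (u,v)" by (cases e)
          have c: "(u,v) \<in> cross_pairs n k" using E eE e by (auto simp: tournaments_def)
          have vu: "(v,u) \<in> cross_pairs n k" using c by (auto simp: cross_pairs_def)
          show "e \<in> tour n k \<omega>"
          proof (cases "fst u < fst v")
            case True then show ?thesis using c e eE by (auto simp: \<omega>_def tour_def Dk_def)
          next
            case False
            have "(v,u) \<notin> E" using E c eE e unfolding tournaments_def by auto
            then show ?thesis using c e False by (auto simp: \<omega>_def tour_def)
          qed
        qed
      qed
      ultimately show "E \<in> tour n k ` PiE_dflt (Dk n k) False (\<lambda>_. UNIV)" by blast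
    qed
  qed
qed

lemma Om_pmf_of_set: "Om (Dk n k) = pmf_of_set (PiE_dflt (Dk n k) False (\<lambda>_. UNIV))"
  unfolding Om_def coin_def by (rule Pi_pmf_of_set) auto

lemma frac_eq_prob:
  "real (card {E \<in> tournaments n k. P E}) / real (card (tournaments n k)) =
   measure_pmf.prob (Om (Dk n k)) {\<omega>. P (tour n k \<omega>)}"
proof -
  let ?S = "PiE_dflt (Dk n k) False (\<lambda>_. UNIV :: bool set)"
  have fS: "finite ?S" by (intro finite_PiE_dflt) auto
  have neS: "?S \<noteq> {}" by simp
  have b: "bij_betw (tour n k) ?S (tournaments n k)" by (rule tour_bij)
  have c1: "card (tournaments n k) = card ?S" using b by (simp add: bij_betw_same_card)
  have "bij_betw (tour n k) (?S \<inter> {\<omega>. P (tour n k \<omega>)}) {E \<in> tournaments n k. P E}"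
  proof (rule bij_betw_imageI)
    show "inj_on (tour n k) (?S \<inter> {\<omega>. P (tour n k \<omega>)})"
      by (rule inj_on_subset[OF bij_betw_imp_inj_on[OF b]]) auto
    have im: "tour n k ` ?S = tournaments n k" by (rule bij_betw_imp_surj_on[OF b])
    show "tour n k ` (?S \<inter> {\<omega>. P (tour n k \<omega>)}) = {E \<in> tournaments n k. P E}"
    proof
      show "tour n k ` (?S \<inter> {\<omega>. P (tour n k \<omega>)}) \<subseteq> {E \<in> tournaments n k. P E}"
        using im by auto
    next
      show "{E \<in> tournaments n k. P E} \<subseteq> tour n k ` (?S \<inter> {\<omega>. P (tour n k \<omega>)})"
      proof
        fix E assume "E \<in> {E \<in> tournaments n k. P E}"
        then have "E \<in> tour n k ` ?S" "P E" using im by auto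
        then obtain \<omega> where "\<omega> \<in> ?S" "E = tour n k \<omega>" by auto
        then show "E \<in> tour n k ` (?S \<inter> {\<omega>. P (tour n k \<omega>)})" using \<open>P E\<close> by auto
      qed
    qed
  qed
  then have c2: "card {E \<in> tournaments n k. P E} = card (?S \<inter> {\<omega>. P (tour n k \<omega>)})"
    by (simp add: bij_betw_same_card)
  show ?thesis
    unfolding Om_pmf_of_set using fS neS by (simp add: measure_pmf_of_set c1 c2)
qed

lemma ekey_in_Dk:
  assumes "u \<in> Vset n k" "v \<in> Vset n k" "fst u \<noteq> fst v"
  shows "ekey u v \<in> Dk n k"
  using assms by (auto simp: ekey_def Dk_def cross_pairs_def)

lemma ekey_sym: "fst u \<noteq> fst v \<Longrightarrow> ekey u v = ekey v u"
  by (auto simp: ekey_def)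

lemma ekey_inj:
  assumes "fst u \<noteq> fst v" "fst u \<noteq> fst v'" "ekey u v = ekey u v'"
  shows "v = v'"
  using assms by (auto simp: ekey_def split: if_splits)

lemma mem_tour:
  assumes "u \<in> Vset n k" "v \<in> Vset n k" "fst u \<noteq> fst v"
  shows "(u,v) \<in> tour n k \<omega> \<longleftrightarrow> \<omega> (ekey u v) = (fst u < fst v)"
  using assms by (auto simp: tour_def ekey_def cross_pairs_def)

lemma Lpi_tour:
  assumes "u \<in> Vset n k" "v \<in> Vset n k" "fst u \<noteq> fst v" "\<pi> u \<noteq> \<pi> v"
  shows "Lpi (tour n k \<omega>) \<pi> u v \<longleftrightarrow> \<omega> (ekey u v) = (\<pi> (fst (ekey u v)) < \<pi> (snd (ekey u v)))"
  using assms by (auto simp: Lpi_def tour_def ekey_def cross_pairs_def)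


lemma finite_cls [simp]: "finite (cls n i)" by (simp add: cls_def)
lemma card_cls [simp]: "card (cls n i) = n" by (simp add: cls_def)

lemma bad_vertices:
  fixes G :: "nat \<times> nat \<Rightarrow> nat \<times> nat \<Rightarrow> bool" and \<beta> \<delta> :: real
  assumes PD: "\<And>X. X \<subseteq> cls n i \<Longrightarrow> real (card X) \<ge> \<delta> * n \<Longrightarrow>
        real (card {(x,y). x \<in> X \<and> y \<in> Y \<and> G x y}) \<ge> \<beta> * card X * card Y"
    and Y: "finite Y" and n: "n > 0" and d: "\<delta> > 0"
  shows "real (card {x \<in> cls n i. real (card {y \<in> Y. G x y}) < \<beta> * card Y}) < \<delta> * n"
proof (rule ccontr)
  define B where "B = {x \<in> cls n i. real (card {y \<in> Y. G x y}) < \<beta> * card Y}"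
  assume "\<not> real (card {x \<in> cls n i. real (card {y \<in> Y. G x y}) < \<beta> * card Y}) < \<delta> * n"
  then have B: "real (card B) \<ge> \<delta> * n" unfolding B_def by simp
  have Bs: "B \<subseteq> cls n i" unfolding B_def by auto
  have fB: "finite B" using Bs by (rule finite_subset) simp
  have "card B > 0" using B n d
    by (metis of_nat_0 of_nat_0_less_iff mult_pos_pos not_less order_le_less_trans)
  then have Bne: "B \<noteq> {}" by auto
  have eq: "{(x,y). x \<in> B \<and> y \<in> Y \<and> G x y} = Sigma B (\<lambda>x. {y \<in> Y. G x y})" by auto
  have "real (card {(x,y). x \<in> B \<and> y \<in> Y \<and> G x y}) = (\<Sum>x\<in>B. real (card {y \<in> Y. G x y}))"
    unfolding eq using fB Y by (simp add: card_SigmaI)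
  also have "\<dots> < (\<Sum>x\<in>B. \<beta> * card Y)"
    by (rule sum_strict_mono[OF fB Bne]) (auto simp: B_def)
  also have "\<dots> = \<beta> * card B * card Y" by simp
  finally show False using PD[OF Bs B] by simp
qed

locale greedy =
  fixes n k r :: nat and G :: "nat \<times> nat \<Rightarrow> nat \<times> nat \<Rightarrow> bool"
    and S :: "nat \<Rightarrow> (nat \<times> nat) set" and \<gamma> \<delta> :: real
  assumes r: "1 \<le> r" "r < k"
    and n: "n > 0"
    and Gsym: "\<And>u v. G u v = G v u"
    and S: "\<And>i. 1 \<le> i \<Longrightarrow> i \<le> r \<Longrightarrow> S i \<subseteq> cls n i"
    and Scard: "\<And>i. 1 \<le> i \<Longrightarrow> i \<le> r \<Longrightarrow> real (card (S i)) \<ge> real n / 18"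
    and gam: "\<gamma> = 1 / (4 * real k ^ 2)"
    and del: "\<delta> = 1 / (72 * real k ^ 2 * 2 ^ k)"
    and PD: "\<And>i j X Y. 1 \<le> i \<Longrightarrow> i \<le> k \<Longrightarrow> 1 \<le> j \<Longrightarrow> j \<le> k \<Longrightarrow> i \<noteq> j \<Longrightarrow>
        X \<subseteq> cls n i \<Longrightarrow> Y \<subseteq> cls n j \<Longrightarrow> real (card X) \<ge> \<delta> * n \<Longrightarrow> real (card Y) \<ge> \<delta> * n \<Longrightarrow>
        real (card {(x,y). x \<in> X \<and> y \<in> Y \<and> G x y}) \<ge> (1 - \<gamma>) / 2 * card X * card Y"
begin

definition "\<beta> = (1 - \<gamma>) / 2"
definition "Z j = (if j \<le> r then S j else cls n j)"
definition "U j vs = {w \<in> Z j. \<forall>x\<in>set vs. G w x}"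
definition "Ext i vs = {v \<in> U (Suc i) vs. \<forall>j. Suc (Suc i) \<le> j \<and> j \<le> k \<longrightarrow>
    \<beta> * card (U j vs) \<le> card (U j (vs @ [v]))}"

fun Good :: "nat \<Rightarrow> (nat \<times> nat) list set" where
  "Good 0 = {[]}"
| "Good (Suc i) = (\<lambda>(vs, v). vs @ [v]) ` Sigma (Good i) (Ext i)"

lemma k2: "k \<ge> 2" using r by simp

lemma gam_pos: "\<gamma> > 0" and gam_le: "real k * \<gamma> = 1 / (4 * real k)"
  using k2 by (auto simp: gam power2_eq_square field_simps)

lemma del_pos: "\<delta> > 0" using k2 by (simp add: del)

lemma beta_pos: "\<beta> > 0" and beta_le: "\<beta> \<le> 1/2"
proof -
  have kk: "real k ^ 2 \<ge> 2 ^ 2" using k2 by (intro power_mono) auto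
  have "1 / (4 * real k ^ 2) \<le> 1 / (4 * 2 ^ 2)" using kk k2 by (intro divide_left_mono) auto
  then have "\<gamma> \<le> 1/16" unfolding gam by simp
  then show "\<beta> > 0" unfolding \<beta>_def by simp
  show "\<beta> \<le> 1/2" using gam_pos unfolding \<beta>_def by simp
qed

lemma one_minus_gam_pow:
  assumes "i \<le> k" shows "(1 - \<gamma>) ^ i \<ge> 1 - 1 / (4 * real k)"
proof -
  have g1: "\<gamma> \<le> 1" using beta_pos unfolding \<beta>_def by simp
  have "1 + real i * (- \<gamma>) \<le> (1 + - \<gamma>) ^ i"
    by (rule Bernoulli_inequality) (use g1 in simp)
  moreover have "real i * \<gamma> \<le> real k * \<gamma>" using assms gam_pos by (simp add: mult_right_mono)
  ultimately show ?thesis using gam_le by simp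
qed

lemma Z_sub: "1 \<le> j \<Longrightarrow> Z j \<subseteq> cls n j"
  using S by (auto simp: Z_def)

lemma Z_card: "1 \<le> j \<Longrightarrow> real (card (Z j)) \<ge> real n / 18"
  using Scard by (auto simp: Z_def)

lemma finite_Z [simp]: "1 \<le> j \<Longrightarrow> finite (Z j)"
  using Z_sub finite_subset by (metis finite_cls)

lemma U_sub: "1 \<le> j \<Longrightarrow> U j vs \<subseteq> cls n j"
  using Z_sub by (auto simp: U_def)

lemma finite_U [simp]: "1 \<le> j \<Longrightarrow> finite (U j vs)"
  unfolding U_def by simp

lemma U_Nil [simp]: "U j [] = Z j" by (simp add: U_def)

lemma U_snoc: "U j (vs @ [v]) = {w \<in> U j vs. G v w}"
  by (auto simp: U_def Gsym)

lemma big_enough: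
  assumes "i \<le> k" "1 \<le> j"
  shows "\<beta> ^ i * card (Z j) \<ge> \<delta> * n"
proof -
  have "(1 - \<gamma>) ^ i \<ge> 1 - 1 / (4 * real k)" by (rule one_minus_gam_pow[OF assms(1)])
  moreover have "1 - 1 / (4 * real k) \<ge> 1/2" using k2 by (simp add: field_simps)
  ultimately have a: "(1 - \<gamma>) ^ i \<ge> 1/2" by simp
  have "\<beta> ^ i = (1 - \<gamma>) ^ i / 2 ^ i" by (simp add: \<beta>_def power_divide)
  also have "\<dots> \<ge> (1/2) / 2 ^ k"
    using a assms(1) by (intro frac_le) (auto simp: power_increasing)
  finally have b: "\<beta> ^ i \<ge> 1 / 2 ^ (Suc k)" by simp
  have "\<delta> * n \<le> (1 / 2 ^ Suc k) * (real n / 18)"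
  proof -
    have kk: "real k ^ 2 \<ge> 1" using k2 by (simp add: one_le_power)
    have "(36::real) * 2 ^ k \<le> 72 * real k ^ 2 * 2 ^ k" using kk by simp
    then have "\<delta> \<le> 1 / (36 * 2 ^ k)" unfolding del
      by (rule divide_left_mono) (use kk k2 in \<open>auto intro!: mult_pos_pos\<close>)
    then have "\<delta> \<le> 1 / 2 ^ Suc k / 18" by simp
    then have "\<delta> * n \<le> 1 / 2 ^ Suc k / 18 * n" by (rule mult_right_mono) simp
    then show ?thesis by simp
  qed
  also have "\<dots> \<le> \<beta> ^ i * card (Z j)"
    using b Z_card[OF assms(2)] beta_pos by (intro mult_mono) auto
  finally show ?thesis .
qed

lemma Good_inv:
  "vs \<in> Good i \<Longrightarrow> i \<le> r \<Longrightarrow> length vs = i \<and> (\<forall>m<i. vs ! m \<in> S (Suc m)) \<and>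
     (\<forall>a<i. \<forall>b<i. a \<noteq> b \<longrightarrow> G (vs ! a) (vs ! b)) \<and>
     (\<forall>j. i < j \<and> j \<le> k \<longrightarrow> real (card (U j vs)) \<ge> \<beta> ^ i * card (Z j)) \<and>
     (\<forall>i'\<le>i. take i' vs \<in> Good i')"
proof (induction i arbitrary: vs)
  case 0 then show ?case by simp
next
  case (Suc i)
  from Suc.prems obtain ws v where vs: "vs = ws @ [v]" and ws: "ws \<in> Good i" and v: "v \<in> Ext i ws"
    by auto
  have IH: "length ws = i \<and> (\<forall>m<i. ws ! m \<in> S (Suc m)) \<and>
     (\<forall>a<i. \<forall>b<i. a \<noteq> b \<longrightarrow> G (ws ! a) (ws ! b)) \<and>
     (\<forall>j. i < j \<and> j \<le> k \<longrightarrow> real (card (U j ws)) \<ge> \<beta> ^ i * card (Z j)) \<and>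
     (\<forall>i'\<le>i. take i' ws \<in> Good i')" using Suc.IH[OF ws] Suc.prems(2) by simp
  have vU: "v \<in> U (Suc i) ws" using v by (simp add: Ext_def)
  have vS: "v \<in> S (Suc i)" using vU Suc.prems(2) by (simp add: U_def Z_def)
  have vG: "\<forall>x\<in>set ws. G v x" using vU by (simp add: U_def)
  have len: "length vs = Suc i" using IH vs by simp
  have p1: "\<forall>m<Suc i. vs ! m \<in> S (Suc m)"
    using IH vS by (auto simp: vs nth_append less_Suc_eq)
  have p2: "\<forall>a<Suc i. \<forall>b<Suc i. a \<noteq> b \<longrightarrow> G (vs ! a) (vs ! b)"
  proof (intro allI impI)
    fix a b assume ab: "a < Suc i" "b < Suc i" "a \<noteq> b"
    show "G (vs ! a) (vs ! b)"
    proof (cases "a = i")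
      case True
      then have "b < i" using ab by simp
      then show ?thesis using vG IH True by (auto simp: vs nth_append)
    next
      case False
      note aF = False
      show ?thesis
      proof (cases "b = i")
        case True
        then have "a < i" using ab aF by simp
        then show ?thesis using vG IH True by (auto simp: vs nth_append Gsym)
      next
        case False then show ?thesis using IH ab aF by (auto simp: vs nth_append)
      qed
    qed
  qed
  have p3: "\<forall>j. Suc i < j \<and> j \<le> k \<longrightarrow> real (card (U j vs)) \<ge> \<beta> ^ Suc i * card (Z j)"
  proof (intro allI impI)
    fix j assume j: "Suc i < j \<and> j \<le> k"
    then have "\<beta> * card (U j ws) \<le> card (U j vs)" using v by (simp add: Ext_def vs)
    moreover have "real (card (U j ws)) \<ge> \<beta> ^ i * card (Z j)" using IH j by simp
    ultimately show "real (card (U j vs)) \<ge> \<beta> ^ Suc i * card (Z j)"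
      using beta_pos by (smt (verit, best) mult.assoc mult_left_mono power_Suc)
  qed
  have p4: "\<forall>i'\<le>Suc i. take i' vs \<in> Good i'"
  proof (intro allI impI)
    fix i' assume i': "i' \<le> Suc i"
    show "take i' vs \<in> Good i'"
    proof (cases "i' = Suc i")
      case True then show ?thesis using len Suc.prems(1) by simp
    next
      case False then show ?thesis using IH i' by (simp add: vs)
    qed
  qed
  show ?case using len p1 p2 p3 p4 by blast
qed

lemma Good_lists: "vs \<in> Good i \<Longrightarrow> i \<le> r \<Longrightarrow> length vs = i \<and> set vs \<subseteq> Vset n k"
proof -
  assume a: "vs \<in> Good i" "i \<le> r"
  then have l: "length vs = i" and m: "\<forall>m<i. vs ! m \<in> S (Suc m)" using Good_inv by blast+
  have "set vs \<subseteq> Vset n k"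
  proof
    fix x assume "x \<in> set vs"
    then obtain m where "m < i" "x = vs ! m" using l by (auto simp: in_set_conv_nth)
    then have "x \<in> cls n (Suc m)" using m S[of "Suc m"] a(2) by auto
    then show "x \<in> Vset n k" using \<open>m < i\<close> a(2) r by (auto simp: cls_def Vset_def)
  qed
  then show ?thesis using l by simp
qed

lemma finite_Good: "i \<le> r \<Longrightarrow> finite (Good i)"
proof -
  assume "i \<le> r"
  then have "Good i \<subseteq> {vs. set vs \<subseteq> Vset n k \<and> length vs = i}" using Good_lists by auto
  moreover have "finite {vs. set vs \<subseteq> Vset n k \<and> length vs = i}"
    by (rule finite_lists_length_eq) (simp add: Vset_def)
  ultimately show ?thesis by (rule finite_subset)
qed

lemma Ext_card:
  assumes vs: "vs \<in> Good i" and i: "i < r"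
  shows "real (card (Ext i vs)) \<ge> \<beta> ^ i * (real n / 18) - real k * \<delta> * n"
proof -
  have inv: "\<forall>j. i < j \<and> j \<le> k \<longrightarrow> real (card (U j vs)) \<ge> \<beta> ^ i * card (Z j)"
    using Good_inv[OF vs] i by simp
  define Bad where "Bad j = {x \<in> cls n (Suc i). real (card {y \<in> U j vs. G x y}) < \<beta> * card (U j vs)}" for j
  let ?J = "{Suc (Suc i)..k}"
  have sub: "U (Suc i) vs - (\<Union>j\<in>?J. Bad j) \<subseteq> Ext i vs"
  proof
    fix v assume v: "v \<in> U (Suc i) vs - (\<Union>j\<in>?J. Bad j)"
    have vc: "v \<in> cls n (Suc i)" using v U_sub[of "Suc i"] by auto
    show "v \<in> Ext i vs" unfolding Ext_def
    proof (intro CollectI conjI allI impI)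
      show "v \<in> U (Suc i) vs" using v by simp
      fix j assume j: "Suc (Suc i) \<le> j \<and> j \<le> k"
      then have "v \<notin> Bad j" using v by auto
      then have "\<beta> * card (U j vs) \<le> real (card {y \<in> U j vs. G v y})" using vc by (auto simp: Bad_def)
      then show "\<beta> * card (U j vs) \<le> card (U j (vs @ [v]))" by (simp add: U_snoc)
    qed
  qed
  have badc: "real (card (Bad j)) < \<delta> * n" if j: "j \<in> ?J" for j
  proof -
    have j1: "1 \<le> j" "j \<le> k" "Suc i < j" using j by auto
    have "\<delta> * n \<le> \<beta> ^ i * card (Z j)" by (rule big_enough) (use i r j1 in auto)
    moreover have "\<beta> ^ i * card (Z j) \<le> card (U j vs)" using inv j1 by simp
    ultimately have Ubig: "real (card (U j vs)) \<ge> \<delta> * n" by linarith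
    show ?thesis unfolding Bad_def
    proof (rule bad_vertices[where \<beta>=\<beta>])
      fix X assume X: "X \<subseteq> cls n (Suc i)" "real (card X) \<ge> \<delta> * n"
      show "real (card {(x,y). x \<in> X \<and> y \<in> U j vs \<and> G x y}) \<ge> \<beta> * card X * card (U j vs)"
        unfolding \<beta>_def
        by (rule PD[of "Suc i" j]) (use j1 i r X U_sub[of j vs] Ubig in auto)
    qed (use n del_pos j1 in auto)
  qed
  have "real (card (\<Union>j\<in>?J. Bad j)) \<le> (\<Sum>j\<in>?J. real (card (Bad j)))"
    using card_UN_le[of ?J Bad] by (metis finite_atLeastAtMost of_nat_le_iff of_nat_sum)
  also have "\<dots> \<le> (\<Sum>j\<in>?J. \<delta> * n)" by (intro sum_mono) (use badc in force)
  also have "\<dots> \<le> real k * \<delta> * n"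
    using del_pos by (simp add: mult_right_mono)
  finally have B: "real (card (\<Union>j\<in>?J. Bad j)) \<le> real k * \<delta> * n" .
  have fU: "finite (U (Suc i) vs)" by simp
  have fB: "finite (\<Union>j\<in>?J. Bad j)" by (auto simp: Bad_def)
  have "card (U (Suc i) vs) = card (U (Suc i) vs \<inter> (\<Union>j\<in>?J. Bad j)) + card (U (Suc i) vs - (\<Union>j\<in>?J. Bad j))"
    by (rule card_Int_Diff[OF fU])
  moreover have "card (U (Suc i) vs \<inter> (\<Union>j\<in>?J. Bad j)) \<le> card (\<Union>j\<in>?J. Bad j)"
    by (rule card_mono[OF fB]) auto
  ultimately have "card (U (Suc i) vs) \<le> card (U (Suc i) vs - (\<Union>j\<in>?J. Bad j)) + card (\<Union>j\<in>?J. Bad j)"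
    by linarith
  moreover have "card (U (Suc i) vs - (\<Union>j\<in>?J. Bad j)) \<le> card (Ext i vs)"
    by (rule card_mono[OF _ sub]) (simp add: Ext_def)
  moreover have "real (card (U (Suc i) vs)) \<ge> \<beta> ^ i * (real n / 18)"
  proof -
    have "real (card (U (Suc i) vs)) \<ge> \<beta> ^ i * card (Z (Suc i))" using inv i r by simp
    moreover have "\<beta> ^ i * card (Z (Suc i)) \<ge> \<beta> ^ i * (real n / 18)"
      using Z_card[of "Suc i"] beta_pos by (simp add: mult_left_mono)
    ultimately show ?thesis by simp
  qed
  ultimately show ?thesis using B by linarith
qed

lemma card_Good_Suc:
  assumes i: "i < r"
  shows "real (card (Good (Suc i))) \<ge> real (card (Good i)) * (\<beta> ^ i * (real n / 18) - real k * \<delta> * n)"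
proof -
  have fG: "finite (Good i)" using finite_Good i by simp
  have fE: "\<And>vs. finite (Ext i vs)" by (simp add: Ext_def)
  have inj: "inj_on (\<lambda>(vs, v). vs @ [v]) (Sigma (Good i) (Ext i))"
    by (auto simp: inj_on_def)
  have "card (Good (Suc i)) = card (Sigma (Good i) (Ext i))"
    by (simp add: card_image[OF inj])
  also have "\<dots> = (\<Sum>vs\<in>Good i. card (Ext i vs))" using fG fE by (simp add: card_SigmaI)
  finally have "real (card (Good (Suc i))) = (\<Sum>vs\<in>Good i. real (card (Ext i vs)))" by simp
  also have "\<dots> \<ge> (\<Sum>vs\<in>Good i. \<beta> ^ i * (real n / 18) - real k * \<delta> * n)"
    by (intro sum_mono Ext_card) (use i in auto)
  finally show ?thesis by (simp add: mult.commute)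
qed

lemma aux_lin: "(A::real) \<le> B \<Longrightarrow> A - C = D \<Longrightarrow> E \<le> C \<Longrightarrow> D \<le> B - E" by linarith

lemma step_bound:
  assumes i: "i < k"
  shows "\<beta> ^ i * (real n / 18) - real k * \<delta> * n \<ge> real n / 18 / 2 ^ i * (1 - 1 / (2 * real k))"
proof -
  have a: "(1 - \<gamma>) ^ i \<ge> 1 - 1 / (4 * real k)" using one_minus_gam_pow i by simp
  have b: "\<beta> ^ i = (1 - \<gamma>) ^ i / 2 ^ i" by (simp add: \<beta>_def power_divide)
  have c: "real k * \<delta> * n \<le> real n / 18 / 2 ^ i * (1 / (4 * real k))"
  proof -
    have "(2::real) ^ i \<le> 2 ^ k" using i by (simp add: power_increasing)
    then have "real k * \<delta> \<le> 1 / (72 * real k * 2 ^ i)"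
      unfolding del using k2 by (simp add: field_simps power2_eq_square)
    then have "real k * \<delta> * n \<le> 1 / (72 * real k * 2 ^ i) * n" by (rule mult_right_mono) simp
    also have "\<dots> = real n / 18 / 2 ^ i * (1 / (4 * real k))" by (simp add: field_simps)
    finally show ?thesis .
  qed
  have "\<beta> ^ i * (real n / 18) = (1 - \<gamma>) ^ i * (real n / 18 / 2 ^ i)" unfolding b by simp
  moreover have "(1 - \<gamma>) ^ i * (real n / 18 / 2 ^ i) \<ge> (1 - 1 / (4 * real k)) * (real n / 18 / 2 ^ i)"
    using a by (rule mult_right_mono) simp
  ultimately have "\<beta> ^ i * (real n / 18) \<ge> real n / 18 / 2 ^ i * (1 - 1 / (4 * real k))"
    by (simp add: mult.commute)
  moreover have "real n / 18 / 2 ^ i * (1 - 1 / (4 * real k)) - real n / 18 / 2 ^ i * (1 / (4 * real k))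
      = real n / 18 / 2 ^ i * (1 - 1 / (2 * real k))" by (simp add: field_simps)
  ultimately show ?thesis using c aux_lin by blast
qed

lemma card_Good:
  assumes "i \<le> r"
  shows "real (card (Good i)) \<ge> (real n / 18) ^ i / 2 ^ (i choose 2) * (1 - real i / (2 * real k))"
  using assms
proof (induction i)
  case 0 then show ?case by simp
next
  case (Suc i)
  have i: "i < r" using Suc.prems by simp
  have IH: "real (card (Good i)) \<ge> (real n / 18) ^ i / 2 ^ (i choose 2) * (1 - real i / (2 * real k))"
    using Suc.IH i by simp
  have h1: "1 - real i / (2 * real k) \<ge> 0" using i r by (simp add: field_simps)
  have h0: "1 / (2 * real k) \<le> 1" using k2 by simp
  have h2: "0 \<le> real n / 18 / 2 ^ i * (1 - 1 / (2 * real k))" using h0 by (intro mult_nonneg_nonneg) auto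
  have "real (card (Good (Suc i))) \<ge> real (card (Good i)) * (\<beta> ^ i * (real n / 18) - real k * \<delta> * n)"
    by (rule card_Good_Suc[OF i])
  moreover have "real (card (Good i)) * (\<beta> ^ i * (real n / 18) - real k * \<delta> * n) \<ge>
      (real n / 18) ^ i / 2 ^ (i choose 2) * (1 - real i / (2 * real k)) * (real n / 18 / 2 ^ i * (1 - 1 / (2 * real k)))"
    using IH step_bound[of i] i r h1 h2 by (intro mult_mono) (auto simp: zero_le_mult_iff)
  moreover have "(real n / 18) ^ i / 2 ^ (i choose 2) * (1 - real i / (2 * real k)) * (real n / 18 / 2 ^ i * (1 - 1 / (2 * real k)))
      = (real n / 18) ^ Suc i / 2 ^ (Suc i choose 2) * ((1 - real i / (2 * real k)) * (1 - 1 / (2 * real k)))"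
  proof -
    have "Suc i choose 2 = (i choose 2) + i"
      by (simp add: numeral_2_eq_2)
    then show ?thesis by (simp add: power_add field_simps)
  qed
  moreover have "(1 - real i / (2 * real k)) * (1 - 1 / (2 * real k)) \<ge> 1 - real (Suc i) / (2 * real k)"
    using k2 by (simp add: field_simps)
  moreover have "(real n / 18) ^ Suc i / 2 ^ (Suc i choose 2) \<ge> 0" by simp
  ultimately show ?case
    by (smt (verit, ccfv_SIG) mult_left_mono)
qed

lemma beta_pow_half:
  assumes "i \<le> k" shows "\<beta> ^ i \<ge> 1 / 2 ^ (i + 1)"
proof -
  have "(1 - \<gamma>) ^ i \<ge> 1 - 1 / (4 * real k)" by (rule one_minus_gam_pow[OF assms])
  moreover have "1 - 1 / (4 * real k) \<ge> 1/2" using k2 by (simp add: field_simps)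
  ultimately have a: "(1 - \<gamma>) ^ i \<ge> 1/2" by simp
  have "\<beta> ^ i = (1 - \<gamma>) ^ i / 2 ^ i" by (simp add: \<beta>_def power_divide)
  also have "\<dots> \<ge> (1/2) / 2 ^ i" using a by (intro divide_right_mono) auto
  finally show ?thesis by simp
qed

lemma set_take_iff:
  assumes "r' \<le> length vs"
  shows "(\<forall>x\<in>set (take r' vs). P x) \<longleftrightarrow> (\<forall>i<r'. P (vs ! i))"
proof
  assume a: "\<forall>x\<in>set (take r' vs). P x"
  show "\<forall>i<r'. P (vs ! i)"
  proof (intro allI impI)
    fix i assume i: "i < r'"
    have "take r' vs ! i \<in> set (take r' vs)" using i assms by (intro nth_mem) simp
    then show "P (vs ! i)" using a i by simp
  qed
next
  assume a: "\<forall>i<r'. P (vs ! i)"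
  show "\<forall>x\<in>set (take r' vs). P x"
  proof
    fix x assume "x \<in> set (take r' vs)"
    then obtain i where i: "i < length (take r' vs)" "x = take r' vs ! i" by (auto simp: in_set_conv_nth)
    then show "P x" using a assms by simp
  qed
qed

lemma Good_friendly:
  assumes vs: "vs \<in> Good r" and GL: "G = Lpi E \<pi>"
  shows "friendly n k r E \<pi> vs \<and> (\<forall>i<r. vs ! i \<in> S (i+1))"
proof -
  note inv0 = Good_inv[OF vs order.refl]
  have len: "length vs = r" using inv0 by blast
  have inS: "\<forall>m<r. vs ! m \<in> S (Suc m)" using inv0 by blast
  have cl0: "\<forall>a<r. \<forall>b<r. a \<noteq> b \<longrightarrow> G (vs ! a) (vs ! b)" using inv0 by blast
  have pre: "\<forall>i'\<le>r. take i' vs \<in> Good i'" using inv0 by blast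
  have inC: "\<forall>i<r. vs ! i \<in> cls n (i+1)"
  proof (intro allI impI)
    fix i assume i: "i < r"
    then have "vs ! i \<in> S (Suc i)" using inS by blast
    moreover have "S (Suc i) \<subseteq> cls n (Suc i)" using S i by simp
    ultimately show "vs ! i \<in> cls n (i+1)" by auto
  qed
  have rt: "rtuple n r vs" unfolding rtuple_def using len inC by blast
  have fr3: "real (card {w \<in> cls n t. \<forall>i<r'. G w (vs ! i)}) \<ge> real n / 2 ^ (r'+1)"
    if t: "r < t" "t \<le> k" and r': "1 \<le> r'" "r' \<le> r" for t r'
  proof -
    have tk: "take r' vs \<in> Good r'" using pre r' by blast
    have inv2: "\<forall>j. r' < j \<and> j \<le> k \<longrightarrow> real (card (U j (take r' vs))) \<ge> \<beta> ^ r' * card (Z j)"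
      using Good_inv[OF tk r'(2)] by blast
    have Zt: "Z t = cls n t" using t by (simp add: Z_def)
    have "U t (take r' vs) = {w \<in> cls n t. \<forall>x\<in>set (take r' vs). G w x}"
      unfolding U_def Zt by simp
    also have "\<dots> = {w \<in> cls n t. \<forall>i<r'. G w (vs ! i)}"
      using set_take_iff[of r' vs "\<lambda>x. G _ x"] len r' by auto
    finally have eq: "U t (take r' vs) = {w \<in> cls n t. \<forall>i<r'. G w (vs ! i)}" .
    have "real (card (U t (take r' vs))) \<ge> \<beta> ^ r' * card (Z t)" using inv2 t r' by simp
    moreover have "card (Z t) = n" using Zt by simp
    moreover have "\<beta> ^ r' * n \<ge> 1 / 2 ^ (r'+1) * n"
      using beta_pow_half[of r'] r' r by (intro mult_right_mono) auto
    ultimately show ?thesis using eq by simp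
  qed
  have f3: "\<forall>t. r < t \<and> t \<le> k \<longrightarrow> (\<forall>r'. 1 \<le> r' \<and> r' \<le> r \<longrightarrow>
        real (card {w \<in> cls n t. \<forall>i<r'. Lpi E \<pi> w (vs ! i)}) \<ge> real n / 2 ^ (r'+1))"
    using fr3 unfolding GL by blast
  have cl: "\<forall>i<r. \<forall>j<r. i \<noteq> j \<longrightarrow> Lpi E \<pi> (vs ! i) (vs ! j)" using cl0 unfolding GL by blast
  have fr: "friendly n k r E \<pi> vs" unfolding friendly_def
    using rt cl f3 by (intro conjI)
  moreover have "\<forall>i<r. vs ! i \<in> S (i+1)" using inS by simp
  ultimately show ?thesis by blast
qed

theorem greedy_count:
  assumes GL: "G = Lpi E \<pi>"
  shows "real (card {vs. friendly n k r E \<pi> vs \<and> (\<forall>i<r. vs ! i \<in> S (i+1))})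
     \<ge> 0.5 * (1/18) ^ r * real n ^ r / 2 ^ (r choose 2)"
proof -
  let ?F = "{vs. friendly n k r E \<pi> vs \<and> (\<forall>i<r. vs ! i \<in> S (i+1))}"
  have sub: "Good r \<subseteq> ?F" using Good_friendly GL by auto
  have "?F \<subseteq> {vs. set vs \<subseteq> Vset n k \<and> length vs = r}"
  proof
    fix vs assume "vs \<in> ?F"
    then have rt: "rtuple n r vs" by (simp add: friendly_def)
    show "vs \<in> {vs. set vs \<subseteq> Vset n k \<and> length vs = r}"
    proof -
      have "set vs \<subseteq> Vset n k"
      proof
        fix x assume "x \<in> set vs"
        then obtain i where i: "i < length vs" "x = vs ! i" by (auto simp: in_set_conv_nth)
        then have "x \<in> cls n (i+1)" "i < r" using rt by (auto simp: rtuple_def)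
        then show "x \<in> Vset n k" using r by (auto simp: cls_def Vset_def)
      qed
      then show ?thesis using rt by (simp add: rtuple_def)
    qed
  qed
  moreover have "finite {vs. set vs \<subseteq> Vset n k \<and> length vs = r}"
    by (rule finite_lists_length_eq) (simp add: Vset_def)
  ultimately have fF: "finite ?F" by (rule finite_subset)
  have "real (card (Good r)) \<ge> (real n / 18) ^ r / 2 ^ (r choose 2) * (1 - real r / (2 * real k))"
    by (rule card_Good) simp
  moreover have "(1 - real r / (2 * real k)) \<ge> 1/2" using r by (simp add: field_simps)
  moreover have "(real n / 18) ^ r / 2 ^ (r choose 2) \<ge> 0" by simp
  ultimately have "(real n / 18) ^ r / 2 ^ (r choose 2) * (1/2) \<le> (real n / 18) ^ r / 2 ^ (r choose 2) * (1 - real r / (2 * real k))"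
    by (intro mult_left_mono) auto
  also have "\<dots> \<le> real (card (Good r))" by fact
  also have "card (Good r) \<le> card ?F" by (rule card_mono[OF fF sub])
  finally have "(real n / 18) ^ r / 2 ^ (r choose 2) * (1/2) \<le> real (card ?F)" by simp
  moreover have "(real n / 18) ^ r / 2 ^ (r choose 2) * (1/2) = 0.5 * (1/18) ^ r * real n ^ r / 2 ^ (r choose 2)"
    by (simp add: power_divide)
  ultimately show ?thesis by simp
qed

end


lemma prob_Om_agree_idx:
  fixes D :: "'a set" and e :: "nat \<Rightarrow> 'a"
  assumes "finite D" "inj_on e {..<r}" "e ` {..<r} \<subseteq> D"
  shows "measure_pmf.prob (Om D) {\<omega>. \<forall>i<r. \<omega> (e i) = c i} = (1/2) ^ r"
proof -
  define b where "b x = c (inv_into {..<r} e x)" for x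
  have "{\<omega>. \<forall>i<r. \<omega> (e i) = c i} = {\<omega>. \<forall>x\<in>e ` {..<r}. \<omega> x = b x}"
    using assms(2) by (auto simp: b_def inv_into_f_f)
  also have "measure_pmf.prob (Om D) \<dots> = (1/2) ^ card (e ` {..<r})"
    by (rule prob_Om_agree[OF assms(1,3)])
  also have "card (e ` {..<r}) = r" using assms(2) by (simp add: card_image)
  finally show ?thesis .
qed

lemma local_agree: "local_to (e ` {..<r}) (\<lambda>\<omega>. \<forall>i<r. \<omega> (e i) = c i)"
  unfolding local_to_def by auto

lemma pmf_prob_mono_le: "A \<subseteq> B \<Longrightarrow> measure_pmf.prob M B \<le> x \<Longrightarrow> measure_pmf.prob M A \<le> x"
  using measure_pmf.finite_measure_mono[of A B M] by simp

lemma prob_union_le: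
  fixes A :: "'i \<Rightarrow> 'b set"
  assumes "finite I" "\<And>i. i \<in> I \<Longrightarrow> measure_pmf.prob M (A i) \<le> b" "X \<subseteq> (\<Union>i\<in>I. A i)"
  shows "measure_pmf.prob M X \<le> real (card I) * b"
proof -
  have "measure_pmf.prob M X \<le> measure_pmf.prob M (\<Union>i\<in>I. A i)"
    using assms(3) by (intro measure_pmf.finite_measure_mono) auto
  also have "\<dots> \<le> (\<Sum>i\<in>I. measure_pmf.prob M (A i))"
    by (rule measure_pmf.finite_measure_subadditive_finite) (use assms(1) in auto)
  also have "\<dots> \<le> (\<Sum>i\<in>I. b)" by (rule sum_mono) (rule assms(2))
  finally show ?thesis by simp
qed

lemma ekey_eq_cases:
  assumes "ekey a b = ekey a' b'"
  shows "(a = a' \<and> b = b') \<or> (a = b' \<and> b = a')"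
  using assms by (auto simp: ekey_def split: if_splits)

lemma fst_neq_cls:
  assumes "v \<in> cls n c" "x \<in> Vset n k - cls n c"
  shows "fst v \<noteq> fst x"
  using assms by (auto simp: cls_def Vset_def)

lemma cls_sub_Vset: "1 \<le> c \<Longrightarrow> c \<le> k \<Longrightarrow> cls n c \<subseteq> Vset n k"
  by (auto simp: cls_def Vset_def)

definition bpi :: "(nat \<times> nat \<Rightarrow> nat) \<Rightarrow> (nat \<times> nat) \<times> (nat \<times> nat) \<Rightarrow> bool" where
  "bpi \<pi> x = (\<pi> (fst x) < \<pi> (snd x))"

lemma LP_adj_agree:
  assumes v: "v \<in> cls n c" "1 \<le> c" "c \<le> k"
    and p: "set p \<subseteq> Vset n k - cls n c"
    and \<pi>: "inj_on \<pi> (Vset n k)"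
  shows "LP_adj (tour n k \<omega>) \<pi> p v \<longleftrightarrow> (\<forall>i<length p. \<omega> (ekey v (p ! i)) = bpi \<pi> (ekey v (p ! i)))"
proof -
  have vV: "v \<in> Vset n k" using v cls_sub_Vset by blast
  have "Lpi (tour n k \<omega>) \<pi> v (p ! i) \<longleftrightarrow> \<omega> (ekey v (p ! i)) = bpi \<pi> (ekey v (p ! i))" if i: "i < length p" for i
  proof -
    have pi: "p ! i \<in> Vset n k - cls n c" using p i nth_mem by blast
    have f: "fst v \<noteq> fst (p ! i)" by (rule fst_neq_cls[OF v(1) pi])
    then have "v \<noteq> p ! i" by auto
    then have "\<pi> v \<noteq> \<pi> (p ! i)" using \<pi> vV pi by (auto dest: inj_onD)
    then show ?thesis using Lpi_tour[OF vV _ f] pi by (simp add: bpi_def)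
  qed
  then show ?thesis unfolding LP_adj_def by auto
qed

lemma ekey_inj_on_list:
  assumes v: "v \<in> cls n c" and p: "set p \<subseteq> Vset n k - cls n c" and d: "distinct p"
  shows "inj_on (\<lambda>i. ekey v (p ! i)) {..<length p}"
proof (rule inj_onI)
  fix i j assume ij: "i \<in> {..<length p}" "j \<in> {..<length p}" "ekey v (p ! i) = ekey v (p ! j)"
  have pi: "p ! i \<in> Vset n k - cls n c" "p ! j \<in> Vset n k - cls n c" using p ij nth_mem by auto
  have "p ! i = p ! j"
    using ekey_inj[OF fst_neq_cls[OF v pi(1)] fst_neq_cls[OF v pi(2)] ij(3)] .
  then show "i = j" using d ij by (simp add: nth_eq_iff_index_eq)
qed

definition adm_R :: "nat \<Rightarrow> nat \<Rightarrow> nat \<Rightarrow> nat \<Rightarrow> (nat \<times> nat) list set \<Rightarrow> bool" where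
  "adm_R n k r c R \<longleftrightarrow> finite R \<and> (\<forall>p\<in>R. length p = r \<and> distinct p \<and> set p \<subseteq> Vset n k - cls n c) \<and>
     (\<forall>p\<in>R. \<forall>q\<in>R. p \<noteq> q \<longrightarrow> set p \<inter> set q = {})"

definition cnt :: "((nat \<times> nat) \<times> (nat \<times> nat)) set \<Rightarrow> (nat \<times> nat \<Rightarrow> nat)
    \<Rightarrow> (nat \<times> nat) list set \<Rightarrow> (nat \<times> nat) set \<Rightarrow> nat" where
  "cnt E \<pi> R S = card {(p,v). p \<in> R \<and> v \<in> S \<and> LP_adj E \<pi> p v}"

lemma L1_single:
  assumes \<pi>: "inj_on \<pi> (Vset n k)" and c: "1 \<le> c" "c \<le> k"
    and R: "adm_R n k r c R" and S: "S \<subseteq> cls n c" and ne: "R \<noteq> {}" "S \<noteq> {}"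
    and \<theta>: "0 \<le> \<theta>"
  shows "measure_pmf.prob (Om (Dk n k))
     {\<omega>. real (cnt (tour n k \<omega>) \<pi> R S) < (1 - \<theta>) * (1/2) ^ r * card R * card S}
     \<le> exp (- 2 * \<theta>\<^sup>2 * ((1/2) ^ r)\<^sup>2 * (card R * card S))"
proof -
  let ?J = "R \<times> S"
  define K where "K j = (\<lambda>i. ekey (snd j) (fst j ! i)) ` {..<r}" for j :: "(nat \<times> nat) list \<times> (nat \<times> nat)"
  define Q where "Q j \<omega> = (\<forall>i<r. \<omega> (ekey (snd j) (fst j ! i)) = bpi \<pi> (ekey (snd j) (fst j ! i)))"
    for j :: "(nat \<times> nat) list \<times> (nat \<times> nat)" and \<omega>
  have fR: "finite R" using R by (simp add: adm_R_def)
  have fS: "finite S" using S finite_subset by (metis finite_cls)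
  have fJ: "finite ?J" using fR fS by simp
  have neJ: "?J \<noteq> {}" using ne by simp
  have pR: "\<And>p. p \<in> R \<Longrightarrow> length p = r \<and> distinct p \<and> set p \<subseteq> Vset n k - cls n c"
    using R by (simp add: adm_R_def)
  have vS: "\<And>v. v \<in> S \<Longrightarrow> v \<in> cls n c" using S by auto
  have QLP: "Q (p,v) \<omega> \<longleftrightarrow> LP_adj (tour n k \<omega>) \<pi> p v" if "p \<in> R" "v \<in> S" for p v \<omega>
    using LP_adj_agree[OF vS[OF that(2)] c _ \<pi>, of p \<omega>] pR[OF that(1)] by (simp add: Q_def)
  have cnt_eq: "cnt (tour n k \<omega>) \<pi> R S = card {j \<in> ?J. Q j \<omega>}" for \<omega>
    unfolding cnt_def by (rule arg_cong[where f=card]) (auto simp: QLP)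
  have KD: "K j \<subseteq> Dk n k" if "j \<in> ?J" for j
  proof
    fix x assume "x \<in> K j"
    then obtain i where i: "i < r" "x = ekey (snd j) (fst j ! i)" by (auto simp: K_def)
    have pi: "fst j ! i \<in> Vset n k - cls n c" using pR[of "fst j"] that i nth_mem by (auto simp: mem_Times_iff)
    have v: "snd j \<in> cls n c" using that vS by auto
    show "x \<in> Dk n k" unfolding i(2)
      by (rule ekey_in_Dk) (use pi v cls_sub_Vset[OF c] fst_neq_cls[OF v pi] in auto)
  qed
  have disj: "disjoint_family_on K ?J"
    unfolding disjoint_family_on_def
  proof (intro ballI impI)
    fix j j' assume jj: "j \<in> ?J" "j' \<in> ?J" "j \<noteq> j'"
    obtain p v where j: "j = (p,v)" by (cases j)
    obtain p' v' where j': "j' = (p',v')" by (cases j')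
    show "K j \<inter> K j' = {}"
    proof (rule ccontr)
      assume "K j \<inter> K j' \<noteq> {}"
      then obtain i i' where ii: "i < r" "i' < r" "ekey v (p ! i) = ekey v' (p' ! i')"
        unfolding K_def j j' by (auto simp: image_iff) (metis)
      have p1: "p ! i \<in> Vset n k - cls n c" using pR[of p] jj(1) ii(1) j nth_mem by fastforce
      have p2: "p' ! i' \<in> Vset n k - cls n c" using pR[of p'] jj(2) ii(2) j' nth_mem by fastforce
      have v1: "v \<in> cls n c" "v' \<in> cls n c" using jj j j' vS by auto
      from ekey_eq_cases[OF ii(3)] show False
      proof
        assume a: "v = v' \<and> p ! i = p' ! i'"
        then have "p \<noteq> p'" using jj j j' by auto
        moreover have "p ! i \<in> set p" "p' ! i' \<in> set p'" using pR[of p] pR[of p'] jj j j' ii by auto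
        moreover have "p \<in> R" "p' \<in> R" using jj j j' by auto
        ultimately show False using R a unfolding adm_R_def by (metis disjoint_iff)
      next
        assume "v = p' ! i' \<and> p ! i = v'"
        then show False using v1 p2 by auto
      qed
    qed
  qed
  have loc: "local_to (K j) (Q j)" for j
    unfolding K_def Q_def by (rule local_agree)
  have pQ: "measure_pmf.prob (Om (Dk n k)) {\<omega>. Q j \<omega>} \<ge> (1/2) ^ r" if j: "j \<in> ?J" for j
  proof -
    obtain p v where jp: "j = (p,v)" by (cases j)
    have p: "p \<in> R" "v \<in> S" using j jp by auto
    have "inj_on (\<lambda>i. ekey v (p ! i)) {..<length p}"
      by (rule ekey_inj_on_list[OF vS[OF p(2)]]) (use pR[OF p(1)] in auto)
    then have "inj_on (\<lambda>i. ekey v (p ! i)) {..<r}" using pR[OF p(1)] by simp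
    moreover have "(\<lambda>i. ekey v (p ! i)) ` {..<r} \<subseteq> Dk n k" using KD[OF j] by (simp add: K_def jp)
    ultimately have "measure_pmf.prob (Om (Dk n k)) {\<omega>. \<forall>i<r. \<omega> (ekey v (p ! i)) = bpi \<pi> (ekey v (p ! i))} = (1/2) ^ r"
      by (intro prob_Om_agree_idx) auto
    then show ?thesis by (simp add: Q_def jp)
  qed
  define q :: real where "q = (1/2) ^ r"
  define a where "a = \<theta> * q * card ?J"
  have a0: "a \<ge> 0" using \<theta> by (simp add: a_def q_def)
  have hb: "measure_pmf.prob (Om (Dk n k)) {\<omega>. real (card {j\<in>?J. Q j \<omega>}) \<le> q * card ?J - a}
          \<le> exp (- 2 * a\<^sup>2 / card ?J)"
    by (rule hoeff_lower[OF finite_Dk fJ neJ KD disj loc]) (use pQ a0 q_def in auto)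
  have cJ: "card ?J = card R * card S" by (simp add: card_cartesian_product)
  have eqa: "q * card ?J - a = (1 - \<theta>) * (1/2) ^ r * card R * card S"
    unfolding a_def q_def cJ by (simp add: algebra_simps)
  have hs: "{\<omega>. real (cnt (tour n k \<omega>) \<pi> R S) < (1 - \<theta>) * (1/2) ^ r * card R * card S}
      \<subseteq> {\<omega>. real (card {j\<in>?J. Q j \<omega>}) \<le> q * card ?J - a}"
    unfolding eqa using cnt_eq by (auto intro: less_imp_le)
  have h3: "measure_pmf.prob (Om (Dk n k))
     {\<omega>. real (cnt (tour n k \<omega>) \<pi> R S) < (1 - \<theta>) * (1/2) ^ r * card R * card S} \<le> exp (- 2 * a\<^sup>2 / card ?J)"
    by (rule pmf_prob_mono_le[OF hs hb])
  have Jpos: "real (card ?J) > 0" using fJ neJ by (simp add: card_gt_0_iff)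
  have "a\<^sup>2 / card ?J = (\<theta> * q)\<^sup>2 * card ?J"
    unfolding a_def using Jpos by (simp add: power2_eq_square)
  then have "- 2 * a\<^sup>2 / card ?J = - 2 * \<theta>\<^sup>2 * ((1/2) ^ r)\<^sup>2 * (card R * card S)"
    by (simp add: q_def cJ power_mult_distrib)
  then show ?thesis using h3 by simp
qed

section \<open>L1: lower density for all orderings\<close>

definition L1 :: "nat \<Rightarrow> nat \<Rightarrow> real \<Rightarrow> real \<Rightarrow> ((nat \<times> nat) \<times> (nat \<times> nat)) set \<Rightarrow> bool" where
  "L1 n k \<theta> \<delta> E \<longleftrightarrow> (\<forall>\<pi> r c R S. bij_betw \<pi> (Vset n k) {1..k*n} \<and> 1 \<le> r \<and> r \<le> k \<and> 1 \<le> c \<and> c \<le> k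
     \<and> adm_R n k r c R \<and> card R \<le> n \<and> S \<subseteq> cls n c \<and> real (card R) \<ge> \<delta> * n \<and> real (card S) \<ge> \<delta> * n
     \<longrightarrow> real (cnt E \<pi> R S) \<ge> (1 - \<theta>) * (1/2) ^ r * card R * card S)"

definition rpi :: "nat \<Rightarrow> nat \<Rightarrow> (nat \<times> nat \<Rightarrow> nat) \<Rightarrow> nat \<times> nat \<Rightarrow> nat" where
  "rpi n k \<pi> = (\<lambda>x. if x \<in> Vset n k then \<pi> x else 0)"

lemma rpi_mem: "bij_betw \<pi> (Vset n k) {1..k*n} \<Longrightarrow> rpi n k \<pi> \<in> PiE_dflt (Vset n k) 0 (\<lambda>_. {1..k*n})"
  unfolding rpi_def PiE_dflt_def bij_betw_def by auto

lemma rpi_inj: "bij_betw \<pi> (Vset n k) {1..k*n} \<Longrightarrow> inj_on (rpi n k \<pi>) (Vset n k)"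
  unfolding rpi_def bij_betw_def inj_on_def by auto

lemma Lpi_rpi: "u \<in> Vset n k \<Longrightarrow> v \<in> Vset n k \<Longrightarrow> Lpi E (rpi n k \<pi>) u v = Lpi E \<pi> u v"
  unfolding rpi_def Lpi_def by auto

lemma cnt_rpi:
  assumes "\<And>p. p \<in> R \<Longrightarrow> set p \<subseteq> Vset n k" "S \<subseteq> Vset n k"
  shows "cnt E (rpi n k \<pi>) R S = cnt E \<pi> R S"
proof -
  have "LP_adj E (rpi n k \<pi>) p v = LP_adj E \<pi> p v" if "p \<in> R" "v \<in> S" for p v
    unfolding LP_adj_def using Lpi_rpi[of v n k _ E \<pi>] assms that nth_mem by blast
  then show ?thesis unfolding cnt_def by (metis (no_types, lifting))
qed

lemma card_subsets_le:
  assumes "finite L"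
  shows "card {R. R \<subseteq> L \<and> card R \<le> m} \<le> (m + 1) * (card L + 1) ^ m"
proof -
  have eq: "{R. R \<subseteq> L \<and> card R \<le> m} = (\<Union>j\<in>{..m}. {R. R \<subseteq> L \<and> card R = j})" by auto
  have "card {R. R \<subseteq> L \<and> card R \<le> m} \<le> (\<Sum>j\<in>{..m}. card {R. R \<subseteq> L \<and> card R = j})"
    unfolding eq by (rule card_UN_le) simp
  also have "\<dots> = (\<Sum>j\<in>{..m}. card L choose j)" using assms by (simp add: n_subsets)
  also have "\<dots> \<le> (\<Sum>j\<in>{..m}. (card L + 1) ^ m)"
  proof (rule sum_mono)
    fix j assume j: "j \<in> {..m}"
    have "card L choose j \<le> (card L + 1) ^ j"
    proof (cases "j \<le> card L")
      case True
      then have "card L choose j \<le> card L ^ j" by (rule binomial_le_pow)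
      also have "\<dots> \<le> (card L + 1) ^ j" by (rule power_mono) auto
      finally show ?thesis .
    next
      case False then show ?thesis by (simp add: binomial_eq_0)
    qed
    also have "\<dots> \<le> (card L + 1) ^ m" using j by (intro power_increasing) auto
    finally show "card L choose j \<le> (card L + 1) ^ m" .
  qed
  also have "\<dots> = (m + 1) * (card L + 1) ^ m" by simp
  finally show ?thesis .
qed

lemma card_Lk_le: "card {p. set p \<subseteq> Vset n k \<and> length p \<le> k} \<le> (k + 1) * (k * n + 1) ^ k"
proof -
  have "card {p. set p \<subseteq> Vset n k \<and> length p \<le> k} = (\<Sum>i\<le>k. (k * n) ^ i)"
    by (simp add: card_lists_length_le card_Vset)
  also have "\<dots> \<le> (\<Sum>i\<le>k. (k * n + 1) ^ k)"
  proof (rule sum_mono)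
    fix i assume "i \<in> {..k}"
    then have "(k * n) ^ i \<le> (k * n + 1) ^ i" "(k * n + 1) ^ i \<le> (k * n + 1) ^ k"
      by (auto intro: power_mono power_increasing)
    then show "(k * n) ^ i \<le> (k * n + 1) ^ k" by linarith
  qed
  finally show ?thesis by simp
qed

lemma count_bound_nat:
  fixes k n L :: nat
  assumes k: "1 \<le> k" and L: "L \<le> (k + 1) * (k * n + 1) ^ k"
  shows "(k * n) ^ (k * n) * k * k * ((n + 1) * (L + 1) ^ n) * 2 ^ (k * n)
     \<le> ((k + 2) * (n + 1)) ^ ((3 * k + 1) * n + 3)"
proof -
  define B where "B = (k + 2) * (n + 1)"
  have B1: "k * n \<le> B" "k \<le> B" "n + 1 \<le> B" "2 \<le> B" "k * n + 1 \<le> B" "k + 2 \<le> B"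
    by (auto simp: B_def algebra_simps)
  have "L + 1 \<le> (k + 2) * (k * n + 1) ^ k"
  proof -
    define X where "X = (k * n + 1) ^ k"
    have "1 \<le> X" by (simp add: X_def)
    moreover have "(k + 2) * X = (k + 1) * X + X" by simp
    ultimately show ?thesis using L unfolding X_def[symmetric] by linarith
  qed
  also have "\<dots> \<le> B * B ^ k" using B1 by (intro mult_le_mono power_mono) auto
  finally have L1: "L + 1 \<le> B ^ (k + 1)" by simp
  have a1: "(k * n) ^ (k * n) \<le> B ^ (k * n)" using B1 by (intro power_mono) auto
  have a2: "(L + 1) ^ n \<le> B ^ ((k + 1) * n)"
  proof -
    have "(L + 1) ^ n \<le> (B ^ (k + 1)) ^ n" by (rule power_mono[OF L1]) simp
    also have "\<dots> = B ^ ((k + 1) * n)" by (simp only: power_mult)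
    finally show ?thesis .
  qed
  have a3: "(2::nat) ^ (k * n) \<le> B ^ (k * n)" using B1 by (intro power_mono) auto
  have "(k * n) ^ (k * n) * k * k * ((n + 1) * (L + 1) ^ n) * 2 ^ (k * n)
      \<le> B ^ (k * n) * B * B * (B * B ^ ((k + 1) * n)) * B ^ (k * n)"
    using a1 a2 a3 B1 by (intro mult_le_mono) auto
  also have "\<dots> = B ^ (k * n + 1 + 1 + (1 + (k + 1) * n) + k * n)"
    by (simp add: power_add mult_ac)
  also have "\<dots> = B ^ ((3 * k + 1) * n + 3)"
    by (rule arg_cong[where f="\<lambda>e. B ^ e"]) (simp add: algebra_simps)
  finally show ?thesis by (simp add: B_def)
qed

lemma L1_bound:
  assumes \<theta>: "0 < \<theta>" and \<delta>: "0 < \<delta>" and k: "1 \<le> k" and n: "0 < n"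
  shows "measure_pmf.prob (Om (Dk n k)) {\<omega>. \<not> L1 n k \<theta> \<delta> (tour n k \<omega>)}
     \<le> real (((k + 2) * (n + 1)) ^ ((3 * k + 1) * n + 3)) * exp (- (2 * \<theta>\<^sup>2 * (1/4) ^ k * \<delta>\<^sup>2) * real n ^ 2)"
proof -
  define C where "C = 2 * \<theta>\<^sup>2 * (1/4) ^ k * \<delta>\<^sup>2"
  define Ps where "Ps = PiE_dflt (Vset n k) (0::nat) (\<lambda>_. {1..k*n})"
  define Lk where "Lk = {p. set p \<subseteq> Vset n k \<and> length p \<le> k}"
  define RR where "RR = {R. R \<subseteq> Lk \<and> card R \<le> n}"
  define I where "I = Ps \<times> {1..k} \<times> {1..k} \<times> RR \<times> Pow (Vset n k)"
  define A where "A = (\<lambda>(\<pi>, r, c, R, S). {\<omega>. inj_on \<pi> (Vset n k) \<and> 1 \<le> r \<and> r \<le> k \<and> 1 \<le> c \<and> c \<le> k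
       \<and> adm_R n k r c R \<and> S \<subseteq> cls n c \<and> real (card R) \<ge> \<delta> * n \<and> real (card S) \<ge> \<delta> * n
       \<and> real (cnt (tour n k \<omega>) \<pi> R S) < (1 - \<theta>) * (1/2) ^ r * card R * card S})"
  have fLk: "finite Lk" unfolding Lk_def by (rule finite_lists_length_le) simp
  have fRR: "finite RR" unfolding RR_def using fLk by auto
  have fPs: "finite Ps" unfolding Ps_def by (intro finite_PiE_dflt) auto
  have fI: "finite I" unfolding I_def using fPs fRR by simp
  have Abound: "measure_pmf.prob (Om (Dk n k)) (A i) \<le> exp (- C * real n ^ 2)" if "i \<in> I" for i
  proof -
    obtain \<pi> r c R S where i: "i = (\<pi>, r, c, R, S)" by (cases i) auto
    show ?thesis
    proof (cases "inj_on \<pi> (Vset n k) \<and> 1 \<le> r \<and> r \<le> k \<and> 1 \<le> c \<and> c \<le> k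
       \<and> adm_R n k r c R \<and> S \<subseteq> cls n c \<and> real (card R) \<ge> \<delta> * n \<and> real (card S) \<ge> \<delta> * n")
      case True
      then have h: "inj_on \<pi> (Vset n k)" "1 \<le> r" "r \<le> k" "1 \<le> c" "c \<le> k" "adm_R n k r c R"
        "S \<subseteq> cls n c" "real (card R) \<ge> \<delta> * n" "real (card S) \<ge> \<delta> * n" by auto
      have dn: "\<delta> * n > 0" using \<delta> n by simp
      have ne: "R \<noteq> {}" "S \<noteq> {}" using h(8,9) dn by auto
      have "A i \<subseteq> {\<omega>. real (cnt (tour n k \<omega>) \<pi> R S) < (1 - \<theta>) * (1/2) ^ r * card R * card S}"
        by (auto simp: A_def i)
      moreover have "measure_pmf.prob (Om (Dk n k)) {\<omega>. real (cnt (tour n k \<omega>) \<pi> R S) < (1 - \<theta>) * (1/2) ^ r * card R * card S}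
          \<le> exp (- 2 * \<theta>\<^sup>2 * ((1/2) ^ r)\<^sup>2 * (card R * card S))"
        by (rule L1_single[OF h(1,4,5,6,7) ne]) (use \<theta> in simp)
      moreover have "- 2 * \<theta>\<^sup>2 * ((1/2) ^ r)\<^sup>2 * (card R * card S) \<le> - C * real n ^ 2"
      proof -
        have q: "((1/2::real) ^ r)\<^sup>2 \<ge> (1/4) ^ k"
        proof -
          have "((1/2::real) ^ r)\<^sup>2 = (1/4) ^ r" by (simp add: power_mult_distrib[symmetric] power2_eq_square power_mult[symmetric] mult.commute)
          also have "\<dots> \<ge> (1/4) ^ k" using h(3) by (intro power_decreasing) auto
          finally show ?thesis .
        qed
        have rs: "real (card R) * real (card S) \<ge> (\<delta> * n) * (\<delta> * n)"
          using h(8,9) dn by (intro mult_mono) auto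
        have "\<theta>\<^sup>2 * (1/4) ^ k * ((\<delta> * n) * (\<delta> * n)) \<le> \<theta>\<^sup>2 * ((1/2) ^ r)\<^sup>2 * (real (card R) * real (card S))"
          using q rs h(8,9) dn by (intro mult_mono) auto
        then show ?thesis by (simp add: C_def power2_eq_square algebra_simps)
      qed
      ultimately show ?thesis by (meson order_trans pmf_prob_mono_le exp_le_cancel_iff)
    next
      case False
      then have "A i = {}" by (auto simp: A_def i)
      then show ?thesis by simp
    qed
  qed
  have cover: "{\<omega>. \<not> L1 n k \<theta> \<delta> (tour n k \<omega>)} \<subseteq> (\<Union>i\<in>I. A i)"
  proof
    fix \<omega> assume "\<omega> \<in> {\<omega>. \<not> L1 n k \<theta> \<delta> (tour n k \<omega>)}"
    then obtain \<pi> r c R S where h: "bij_betw \<pi> (Vset n k) {1..k*n}" "1 \<le> r" "r \<le> k" "1 \<le> c" "c \<le> k"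
      "adm_R n k r c R" "card R \<le> n" "S \<subseteq> cls n c" "real (card R) \<ge> \<delta> * n" "real (card S) \<ge> \<delta> * n"
      "\<not> real (cnt (tour n k \<omega>) \<pi> R S) \<ge> (1 - \<theta>) * (1/2) ^ r * card R * card S"
      unfolding L1_def by blast
    have pR: "\<And>p. p \<in> R \<Longrightarrow> set p \<subseteq> Vset n k \<and> length p = r" using h(6) by (auto simp: adm_R_def)
    have SV: "S \<subseteq> Vset n k" using h(8) cls_sub_Vset[OF h(4,5)] by auto
    have "cnt (tour n k \<omega>) (rpi n k \<pi>) R S = cnt (tour n k \<omega>) \<pi> R S"
      by (rule cnt_rpi) (use pR SV in auto)
    then have "\<omega> \<in> A (rpi n k \<pi>, r, c, R, S)"
      using h rpi_inj[OF h(1)] by (auto simp: A_def)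
    moreover have "(rpi n k \<pi>, r, c, R, S) \<in> I"
      using rpi_mem[OF h(1)] h pR SV unfolding I_def Ps_def RR_def Lk_def by auto
    ultimately show "\<omega> \<in> (\<Union>i\<in>I. A i)" by blast
  qed
  have P1: "measure_pmf.prob (Om (Dk n k)) {\<omega>. \<not> L1 n k \<theta> \<delta> (tour n k \<omega>)} \<le> real (card I) * exp (- C * real n ^ 2)"
    by (rule prob_union_le[OF fI Abound cover])
  have "card I \<le> ((k + 2) * (n + 1)) ^ ((3 * k + 1) * n + 3)"
  proof -
    have cPs: "card Ps = (k * n) ^ (k * n)" unfolding Ps_def
      by (subst card_PiE_dflt) (auto simp: card_Vset)
    have cRR: "card RR \<le> (n + 1) * (card Lk + 1) ^ n" unfolding RR_def by (rule card_subsets_le[OF fLk])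
    have cI: "card I = (k * n) ^ (k * n) * k * k * card RR * 2 ^ (k * n)"
      unfolding I_def by (simp add: card_cartesian_product cPs card_Pow card_Vset)
    have "card I \<le> (k * n) ^ (k * n) * k * k * ((n + 1) * (card Lk + 1) ^ n) * 2 ^ (k * n)"
      unfolding cI using cRR by (intro mult_le_mono) auto
    also have "\<dots> \<le> ((k + 2) * (n + 1)) ^ ((3 * k + 1) * n + 3)"
      by (rule count_bound_nat[OF k]) (unfold Lk_def, rule card_Lk_le)
    finally show ?thesis .
  qed
  then have cIr: "real (card I) \<le> real (((k + 2) * (n + 1)) ^ ((3 * k + 1) * n + 3))"
    by (simp only: of_nat_le_iff)
  then have "real (card I) * exp (- C * real n ^ 2) \<le> real (((k + 2) * (n + 1)) ^ ((3 * k + 1) * n + 3)) * exp (- C * real n ^ 2)"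
    by (rule mult_right_mono) simp
  with P1 show ?thesis unfolding C_def by (rule order_trans)
qed

lemma exp_pow_bound:
  fixes B :: nat assumes "B > 0"
  shows "real (B ^ m) * exp x = exp (real m * ln (real B) + x)"
proof -
  have "exp (real m * ln (real B)) = exp (ln (real B)) ^ m" by (rule exp_of_nat_mult)
  also have "\<dots> = real B ^ m" using assms by simp
  finally show ?thesis by (simp add: exp_add)
qed

lemma L1_whp:
  assumes \<theta>: "0 < \<theta>" and \<delta>: "0 < \<delta>" and k: "1 \<le> k"
  shows "(\<lambda>n. measure_pmf.prob (Om (Dk n k)) {\<omega>. \<not> L1 n k \<theta> \<delta> (tour n k \<omega>)}) \<longlonglongrightarrow> 0"
proof (rule tendsto_sandwich[where f="\<lambda>_. 0"])
  define C where "C = 2 * \<theta>\<^sup>2 * (1/4) ^ k * \<delta>\<^sup>2"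
  have C: "C > 0" using \<theta> \<delta> by (simp add: C_def)
  define K where "K = real k"
  have K: "K \<ge> 1" using k by (simp add: K_def)
  show "\<forall>\<^sub>F n in sequentially. 0 \<le> measure_pmf.prob (Om (Dk n k)) {\<omega>. \<not> L1 n k \<theta> \<delta> (tour n k \<omega>)}" by simp
  show "\<forall>\<^sub>F n in sequentially. measure_pmf.prob (Om (Dk n k)) {\<omega>. \<not> L1 n k \<theta> \<delta> (tour n k \<omega>)}
     \<le> exp (((3 * K + 1) * real n + 3) * ln ((K + 2) * (real n + 1)) - C * real n ^ 2)"
  proof (rule eventually_mono[OF eventually_gt_at_top[of 0]])
    fix n :: nat assume n: "0 < n"
    have "measure_pmf.prob (Om (Dk n k)) {\<omega>. \<not> L1 n k \<theta> \<delta> (tour n k \<omega>)}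
     \<le> real (((k + 2) * (n + 1)) ^ ((3 * k + 1) * n + 3)) * exp (- C * real n ^ 2)"
      using L1_bound[OF \<theta> \<delta> k n] by (simp add: C_def)
    also have "\<dots> = exp (real ((3 * k + 1) * n + 3) * ln (real ((k + 2) * (n + 1))) + - C * real n ^ 2)"
      by (rule exp_pow_bound) simp
    also have "\<dots> = exp (((3 * K + 1) * real n + 3) * ln ((K + 2) * (real n + 1)) - C * real n ^ 2)"
      by (simp add: K_def algebra_simps)
    finally show "measure_pmf.prob (Om (Dk n k)) {\<omega>. \<not> L1 n k \<theta> \<delta> (tour n k \<omega>)}
     \<le> exp (((3 * K + 1) * real n + 3) * ln ((K + 2) * (real n + 1)) - C * real n ^ 2)" .
  qed
  show "(\<lambda>_. 0) \<longlonglongrightarrow> (0::real)" by simp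
  show "(\<lambda>n. exp (((3 * K + 1) * real n + 3) * ln ((K + 2) * (real n + 1)) - C * real n ^ 2)) \<longlonglongrightarrow> 0"
    using K C by real_asymp
qed


lemma Lpi_sym: "Lpi E \<pi> u v = Lpi E \<pi> v u"
  unfolding Lpi_def by auto

lemma rtuple_props:
  assumes "rtuple n r p" "r < k"
  shows "distinct p" "set p \<subseteq> Vset n k - cls n (r+1)"
proof -
  have l: "length p = r" and c: "\<And>i. i < r \<Longrightarrow> p ! i \<in> cls n (i+1)" using assms(1) by (auto simp: rtuple_def)
  show "distinct p" unfolding distinct_conv_nth
  proof (intro allI impI)
    fix i j assume ij: "i < length p" "j < length p" "i \<noteq> j"
    then have "p ! i \<in> cls n (i+1)" "p ! j \<in> cls n (j+1)" using c l by auto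
    then show "p ! i \<noteq> p ! j" using ij by (auto simp: cls_def)
  qed
  show "set p \<subseteq> Vset n k - cls n (r+1)"
  proof
    fix x assume "x \<in> set p"
    then obtain i where i: "i < r" "x = p ! i" using l by (auto simp: in_set_conv_nth)
    then have "x \<in> cls n (i+1)" using c by simp
    then show "x \<in> Vset n k - cls n (r+1)" using i assms(2) by (auto simp: cls_def Vset_def)
  qed
qed

lemma finite_rtuples: "finite {p. rtuple n r p}"
proof -
  have "{p. rtuple n r p} \<subseteq> {xs. set xs \<subseteq> Vset n r \<and> length xs = r}"
  proof
    fix p assume "p \<in> {p. rtuple n r p}"
    then have l: "length p = r" and c: "\<And>i. i < r \<Longrightarrow> p ! i \<in> cls n (i+1)" by (auto simp: rtuple_def)
    have "set p \<subseteq> Vset n r"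
    proof
      fix x assume "x \<in> set p"
      then obtain i where i: "i < r" "x = p ! i" using l by (auto simp: in_set_conv_nth)
      then have "x \<in> cls n (i+1)" using c by simp
      then show "x \<in> Vset n r" using i by (auto simp: cls_def Vset_def)
    qed
    then show "p \<in> {xs. set xs \<subseteq> Vset n r \<and> length xs = r}" using l by simp
  qed
  moreover have "finite {xs. set xs \<subseteq> Vset n r \<and> length xs = r}"
    by (rule finite_lists_length_eq) simp
  ultimately show ?thesis by (rule finite_subset)
qed

lemma L1_prop1:
  assumes "L1 n k (1/2) \<epsilon> E"
  shows "prop1 n k \<epsilon> E"
  unfolding prop1_def
proof (intro allI impI)
  fix r \<pi> P R S
  assume h: "1 \<le> r \<and> r < k \<and> bij_betw \<pi> (Vset n k) {1..k*n} \<and> perfect_rset n r P \<and> R \<subseteq> P \<and>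
     \<epsilon> * real n \<le> real (card R) \<and> S \<subseteq> cls n (r+1) \<and> \<epsilon> * real n \<le> real (card S)"
  have Pt: "\<And>p. p \<in> P \<Longrightarrow> rtuple n r p" and Pd: "\<forall>p\<in>P. \<forall>q\<in>P. p \<noteq> q \<longrightarrow> set p \<inter> set q = {}"
    and Pc: "card P = n" using h by (auto simp: perfect_rset_def)
  have fP: "finite P" using finite_rtuples[of n r] Pt by (metis finite_subset mem_Collect_eq subsetI)
  have fR: "finite R" using fP h finite_subset by blast
  have adm: "adm_R n k r (r+1) R"
    unfolding adm_R_def
  proof (intro conjI ballI impI)
    show "finite R" by (rule fR)
  next
    fix p assume "p \<in> R"
    then have rt: "rtuple n r p" using h Pt by auto
    show "length p = r" using rt by (simp add: rtuple_def)
    have rk: "r < k" using h by simp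
    show "distinct p" using rtuple_props(1)[where k=k, OF rt rk] .
    show "set p \<subseteq> Vset n k - cls n (r+1)" using rtuple_props(2)[where k=k, OF rt rk] .
  next
    fix p q assume "p \<in> R" "q \<in> R" "p \<noteq> q"
    then show "set p \<inter> set q = {}" using Pd h by auto
  qed
  have cR: "card R \<le> n" using card_mono[OF fP] h Pc by auto
  have "real (cnt E \<pi> R S) \<ge> (1 - 1/2) * (1/2) ^ r * card R * card S"
    using assms unfolding L1_def using h adm cR by (metis add_leD2 le_eq_less_or_eq le_add2 Suc_eq_plus1 Suc_leI)
  then show "\<not> X_event r E \<pi> P R S"
    unfolding X_event_def cnt_def[symmetric] by (simp add: field_simps)
qed

lemma L1_prop2:
  assumes k: "2 \<le> k" and n: "0 < n"
    and L: "L1 n k (1 / (4 * real k ^ 2)) (1 / (72 * real k ^ 2 * 2 ^ k)) E"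
  shows "prop2 n k E"
  unfolding prop2_def
proof (intro allI impI)
  fix r \<pi> S
  assume h: "1 \<le> r \<and> r < k \<and> bij_betw \<pi> (Vset n k) {1..k*n} \<and>
     (\<forall>i. 1 \<le> i \<and> i \<le> r \<longrightarrow> S i \<subseteq> cls n i \<and> real n / 18 \<le> real (card (S i)))"
  define \<gamma> where "\<gamma> = 1 / (4 * real k ^ 2)"
  define \<delta> where "\<delta> = 1 / (72 * real k ^ 2 * 2 ^ k)"
  have PD: "real (card {(x,y). x \<in> X \<and> y \<in> Y \<and> Lpi E \<pi> x y}) \<ge> (1 - \<gamma>) / 2 * card X * card Y"
    if ij: "1 \<le> i" "i \<le> k" "1 \<le> j" "j \<le> k" "i \<noteq> j" and X: "X \<subseteq> cls n i" and Y: "Y \<subseteq> cls n j"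
      and cX: "real (card X) \<ge> \<delta> * n" and cY: "real (card Y) \<ge> \<delta> * n" for i j X Y
  proof -
    define R where "R = (\<lambda>x. [x]) ` X"
    have fX: "finite X" using X finite_subset by (metis finite_cls)
    have injR: "inj_on (\<lambda>x. [x]) X" by (auto simp: inj_on_def)
    have cR: "card R = card X" unfolding R_def using injR by (simp add: card_image)
    have adm: "adm_R n k 1 j R"
      unfolding adm_R_def R_def
    proof (intro conjI ballI impI)
      show "finite ((\<lambda>x. [x]) ` X)" using fX by simp
    next
      fix p assume "p \<in> (\<lambda>x. [x]) ` X"
      then obtain x where x: "x \<in> X" "p = [x]" by auto
      have "x \<in> cls n i" using x X by auto
      then have "x \<in> Vset n k - cls n j" using ij by (auto simp: cls_def Vset_def)
      then show "length p = 1" "distinct p" "set p \<subseteq> Vset n k - cls n j" using x by auto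
    next
      fix p q assume "p \<in> (\<lambda>x. [x]) ` X" "q \<in> (\<lambda>x. [x]) ` X" "p \<noteq> q"
      then show "set p \<inter> set q = {}" by auto
    qed
    have cRn: "card R \<le> n" using cR card_mono[OF finite_cls X] by simp
    have L': "\<And>\<pi> r c R S. bij_betw \<pi> (Vset n k) {1..k*n} \<and> 1 \<le> r \<and> r \<le> k \<and> 1 \<le> c \<and> c \<le> k
     \<and> adm_R n k r c R \<and> card R \<le> n \<and> S \<subseteq> cls n c \<and> real (card R) \<ge> \<delta> * n \<and> real (card S) \<ge> \<delta> * n
     \<Longrightarrow> real (cnt E \<pi> R S) \<ge> (1 - \<gamma>) * (1/2) ^ r * card R * card S"
      using L unfolding L1_def \<gamma>_def[symmetric] \<delta>_def[symmetric] by blast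
    have "real (cnt E \<pi> R Y) \<ge> (1 - \<gamma>) * (1/2) ^ 1 * card R * card Y"
      by (rule L') (use h ij adm cRn Y cX cY cR k in auto)
    moreover have "cnt E \<pi> R Y = card {(x,y). x \<in> X \<and> y \<in> Y \<and> Lpi E \<pi> x y}"
    proof -
      have "{(p,v). p \<in> R \<and> v \<in> Y \<and> LP_adj E \<pi> p v} = (\<lambda>(x,y). ([x],y)) ` {(x,y). x \<in> X \<and> y \<in> Y \<and> Lpi E \<pi> x y}"
        by (auto simp: R_def LP_adj_def Lpi_sym)
      moreover have "inj_on (\<lambda>(x,y). ([x],y)) {(x,y). x \<in> X \<and> y \<in> Y \<and> Lpi E \<pi> x y}"
        by (auto simp: inj_on_def)
      ultimately show ?thesis unfolding cnt_def by (simp add: card_image)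
    qed
    ultimately show ?thesis using cR by (simp add: field_simps)
  qed
  interpret G: greedy n k r "Lpi E \<pi>" S \<gamma> \<delta>
  proof unfold_locales
    show "1 \<le> r" "r < k" using h by auto
    show "0 < n" by (rule n)
    show "\<And>u v. Lpi E \<pi> u v = Lpi E \<pi> v u" by (rule Lpi_sym)
    show "\<And>i. 1 \<le> i \<Longrightarrow> i \<le> r \<Longrightarrow> S i \<subseteq> cls n i" using h by auto
    show "\<And>i. 1 \<le> i \<Longrightarrow> i \<le> r \<Longrightarrow> real n / 18 \<le> real (card (S i))" using h by auto
    show "\<gamma> = 1 / (4 * real k ^ 2)" by (simp add: \<gamma>_def)
    show "\<delta> = 1 / (72 * real k ^ 2 * 2 ^ k)" by (simp add: \<delta>_def)
    show "\<And>i j X Y. 1 \<le> i \<Longrightarrow> i \<le> k \<Longrightarrow> 1 \<le> j \<Longrightarrow> j \<le> k \<Longrightarrow> i \<noteq> j \<Longrightarrow>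
        X \<subseteq> cls n i \<Longrightarrow> Y \<subseteq> cls n j \<Longrightarrow> real (card X) \<ge> \<delta> * n \<Longrightarrow> real (card Y) \<ge> \<delta> * n \<Longrightarrow>
        real (card {(x,y). x \<in> X \<and> y \<in> Y \<and> Lpi E \<pi> x y}) \<ge> (1 - \<gamma>) / 2 * card X * card Y"
      by (rule PD)
  qed
  have "real (card {vs. friendly n k r E \<pi> vs \<and> (\<forall>i<r. vs ! i \<in> S (i+1))})
     \<ge> 0.5 * (1/18) ^ r * real n ^ r / 2 ^ (r choose 2)"
    by (rule G.greedy_count) simp
  then show "\<not> Y_event n k r E \<pi> S" unfolding Y_event_def by simp
qed


lemma prob_not: "measure_pmf.prob M {\<omega>. \<not> P \<omega>} = 1 - measure_pmf.prob M {\<omega>. P \<omega>}"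
proof -
  have "{\<omega>. \<not> P \<omega>} = space (measure_pmf M) - {\<omega>. P \<omega>}" by auto
  then show ?thesis using measure_pmf.prob_compl[of "{\<omega>. P \<omega>}" M] by simp
qed

lemma powr_sq_div:
  assumes "0 < (x::real)"
  shows "(x powr (2/3))\<^sup>2 / x = x powr (1/3)"
proof -
  have "(x powr (2/3))\<^sup>2 = x powr (4/3)"
    by (simp add: power2_eq_square powr_add[symmetric])
  moreover have "x powr (1/3) = x powr (4/3) / x"
  proof -
    have "x powr (1/3) = x powr (4/3 - 1)" by simp
    also have "\<dots> = x powr (4/3) / x powr 1" by (rule powr_diff)
    also have "\<dots> = x powr (4/3) / x" using assms by simp
    finally show ?thesis .
  qed
  ultimately show ?thesis by simp
qed

lemma inconsistent_agree:
  assumes v: "v \<in> Vset n k" and p: "set p \<subseteq> Vset n k" and f: "\<forall>a\<in>set p. fst v \<noteq> fst a"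
    and W: "length W = length p"
  shows "inconsistent (tour n k \<omega>) W p v \<longleftrightarrow>
    \<not> (\<forall>i<length p. \<omega> (ekey v (p ! i)) = ((fst v < fst (p ! i)) = W ! i))"
proof -
  have "((v, p ! i) \<in> tour n k \<omega>) = W ! i \<longleftrightarrow> \<omega> (ekey v (p ! i)) = ((fst v < fst (p ! i)) = W ! i)"
    if i: "i < length p" for i
  proof -
    have pi: "p ! i \<in> set p" using i by simp
    have "(v, p ! i) \<in> tour n k \<omega> \<longleftrightarrow> \<omega> (ekey v (p ! i)) = (fst v < fst (p ! i))"
      by (rule mem_tour) (use v p f pi in auto)
    then show ?thesis by auto
  qed
  then show ?thesis unfolding inconsistent_def by auto
qed

lemma local_not_agree: "local_to (e ` {..<r}) (\<lambda>\<omega>. \<not> (\<forall>i<r. \<omega> (e i) = c i))"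
  unfolding local_to_def by auto

lemma P3_single:
  assumes r: "1 \<le> r" "r < t" "t \<le> k" and n: "0 < n"
    and Ws: "length Ws = d" "\<forall>W\<in>set Ws. length W = r"
    and ps: "length ps = d" "\<forall>p\<in>set ps. rtuple n r p"
    and disj: "\<forall>j<d. \<forall>j'<d. j \<noteq> j' \<longrightarrow> set (ps ! j) \<inter> set (ps ! j') = {}"
  shows "measure_pmf.prob (Om (Dk n k))
     {\<omega>. real (card (I_set n (tour n k \<omega>) Ws ps t)) > real n * (1 - 1/2^r) ^ d + real n powr (2/3)}
     \<le> exp (- 2 * real n powr (1/3))"
proof -
  define e where "e v j i = ekey v (ps ! j ! i)" for v :: "nat \<times> nat" and j i
  define c where "c v j i = ((fst v < fst (ps ! j ! i)) = Ws ! j ! i)" for v :: "nat \<times> nat" and j i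
  define Q where "Q v \<omega> = (\<forall>j<d. \<not> (\<forall>i<r. \<omega> (e v j i) = c v j i))" for v \<omega>
  define K where "K v = (\<Union>j<d. e v j ` {..<r})" for v
  let ?J = "cls n t"
  have rt: "\<And>j. j < d \<Longrightarrow> rtuple n r (ps ! j)" using ps by auto
  have rk: "r < k" using r by simp
  have pj: "\<And>j. j < d \<Longrightarrow> length (ps ! j) = r \<and> distinct (ps ! j) \<and> set (ps ! j) \<subseteq> Vset n k - cls n (r+1)"
    using rtuple_props[OF rt rk] rt by (auto simp: rtuple_def)
  have pjt: "\<And>j a. j < d \<Longrightarrow> a \<in> set (ps ! j) \<Longrightarrow> a \<in> Vset n k \<and> fst a \<le> r"
  proof -
    fix j a assume j: "j < d" "a \<in> set (ps ! j)"
    then obtain i where i: "i < r" "a = ps ! j ! i" using pj[OF j(1)] by (auto simp: in_set_conv_nth)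
    then have "a \<in> cls n (i+1)" using rt[OF j(1)] by (auto simp: rtuple_def)
    then have "fst a \<le> r" using i by (auto simp: cls_def)
    moreover have "a \<in> Vset n k" using pj[OF j(1)] j(2) by blast
    ultimately show "a \<in> Vset n k \<and> fst a \<le> r" by simp
  qed
  have vV: "\<And>v. v \<in> ?J \<Longrightarrow> v \<in> Vset n k \<and> fst v = t" using r by (auto simp: cls_def Vset_def)
  have Qeq: "Q v \<omega> \<longleftrightarrow> (\<forall>j<length ps. inconsistent (tour n k \<omega>) (Ws ! j) (ps ! j) v)" if v: "v \<in> ?J" for v \<omega>
  proof -
    have "inconsistent (tour n k \<omega>) (Ws ! j) (ps ! j) v \<longleftrightarrow> \<not> (\<forall>i<r. \<omega> (e v j i) = c v j i)" if j: "j < d" for j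
    proof -
      have f: "\<forall>a\<in>set (ps ! j). fst v \<noteq> fst a" using pjt[OF j] vV[OF v] r by fastforce
      have W: "length (Ws ! j) = length (ps ! j)" using Ws pj[OF j] j by auto
      have sub: "set (ps ! j) \<subseteq> Vset n k" using pj[OF j] by blast
      have l: "length (ps ! j) = r" using pj[OF j] by blast
      show ?thesis
        using inconsistent_agree[OF conjunct1[OF vV[OF v]] sub f W, of \<omega>] l
        by (simp add: e_def c_def)
    qed
    then show ?thesis unfolding Q_def using ps by auto
  qed
  have Ieq: "I_set n (tour n k \<omega>) Ws ps t = {v \<in> ?J. Q v \<omega>}" for \<omega>
    unfolding I_set_def using Qeq by auto
  have eD: "e v j ` {..<r} \<subseteq> Dk n k" if v: "v \<in> ?J" and j: "j < d" for v j
  proof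
    fix x assume "x \<in> e v j ` {..<r}"
    then obtain i where i: "i < r" "x = e v j i" by auto
    have a: "ps ! j ! i \<in> set (ps ! j)" using pj[OF j] i by simp
    show "x \<in> Dk n k" unfolding i e_def
      by (rule ekey_in_Dk) (use pjt[OF j a] vV[OF v] r in auto)
  qed
  have KD: "K v \<subseteq> Dk n k" if "v \<in> ?J" for v using eD[OF that] by (auto simp: K_def)
  have loc: "local_to (K v) (Q v)" for v
    unfolding local_to_def
  proof (intro allI impI)
    fix \<omega> \<omega>' :: "(nat \<times> nat) \<times> (nat \<times> nat) \<Rightarrow> bool" assume a: "\<forall>x\<in>K v. \<omega> x = \<omega>' x"
    have "\<forall>j<d. \<forall>i<r. \<omega> (e v j i) = \<omega>' (e v j i)"
    proof (intro allI impI)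
      fix j i assume "j < d" "i < r"
      then have "e v j i \<in> K v" unfolding K_def by blast
      then show "\<omega> (e v j i) = \<omega>' (e v j i)" using a by blast
    qed
    then show "Q v \<omega> = Q v \<omega>'" unfolding Q_def by simp
  qed
  have dK: "disjoint_family_on K ?J"
    unfolding disjoint_family_on_def
  proof (intro ballI impI)
    fix v v' assume vv: "v \<in> ?J" "v' \<in> ?J" "v \<noteq> v'"
    show "K v \<inter> K v' = {}"
    proof (rule ccontr)
      assume "K v \<inter> K v' \<noteq> {}"
      then obtain x where x: "x \<in> K v" "x \<in> K v'" by blast
      from x(1) obtain j i where ji: "j < d" "i < r" "x = e v j i" unfolding K_def by blast
      from x(2) obtain j' i' where ji': "j' < d" "i' < r" "x = e v' j' i'" unfolding K_def by blast
      have jj: "j < d" "i < r" "j' < d" "i' < r" "ekey v (ps ! j ! i) = ekey v' (ps ! j' ! i')"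
        using ji ji' by (auto simp: e_def)
      have a: "ps ! j ! i \<in> set (ps ! j)" "ps ! j' ! i' \<in> set (ps ! j')" using pj jj by auto
      from ekey_eq_cases[OF jj(5)] show False
      proof
        assume "v = v' \<and> ps ! j ! i = ps ! j' ! i'" then show False using vv by simp
      next
        assume "v = ps ! j' ! i' \<and> ps ! j ! i = v'"
        then show False using pjt[OF jj(3) a(2)] vV[OF vv(1)] r by auto
      qed
    qed
  qed
  have pQ: "measure_pmf.prob (Om (Dk n k)) {\<omega>. Q v \<omega>} \<le> (1 - 1/2^r) ^ d" if v: "v \<in> ?J" for v
  proof -
    have fne: "fst v \<noteq> fst a" if "j < d" "a \<in> set (ps ! j)" for j a
      using pjt[OF that] vV[OF v] r by auto
    have dj: "disjoint_family_on (\<lambda>j. e v j ` {..<r}) {..<d}"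
      unfolding disjoint_family_on_def
    proof (intro ballI impI)
      fix j j' assume jj: "j \<in> {..<d}" "j' \<in> {..<d}" "j \<noteq> j'"
      show "e v j ` {..<r} \<inter> e v j' ` {..<r} = {}"
      proof (rule ccontr)
        assume "e v j ` {..<r} \<inter> e v j' ` {..<r} \<noteq> {}"
        then obtain x where x: "x \<in> e v j ` {..<r}" "x \<in> e v j' ` {..<r}" by blast
        from x(1) obtain i where i: "i < r" "x = e v j i" by blast
        from x(2) obtain i' where i': "i' < r" "x = e v j' i'" by blast
        have ii: "ekey v (ps ! j ! i) = ekey v (ps ! j' ! i')" using i i' by (simp add: e_def)
        have jd: "j < d" "j' < d" using jj by auto
        have a: "ps ! j ! i \<in> set (ps ! j)" "ps ! j' ! i' \<in> set (ps ! j')"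
          using pj[OF jd(1)] pj[OF jd(2)] i(1) i'(1) by auto
        have eq: "ps ! j ! i = ps ! j' ! i'"
          by (rule ekey_inj[OF fne[OF jd(1) a(1)] fne[OF jd(2) a(2)] ii])
        have "set (ps ! j) \<inter> set (ps ! j') = {}" using disj jd jj(3) by blast
        then show False using a eq by auto
      qed
    qed
    have "measure_pmf.prob (Om (Dk n k)) {\<omega>. Q v \<omega>} =
        (\<Prod>j\<in>{..<d}. measure_pmf.prob (Om (Dk n k)) {\<omega>. \<not> (\<forall>i<r. \<omega> (e v j i) = c v j i)})"
    proof -
      have "measure_pmf.prob (Om (Dk n k)) {\<omega>. \<forall>j\<in>{..<d}. \<not> (\<forall>i<r. \<omega> (e v j i) = c v j i)} =
        (\<Prod>j\<in>{..<d}. measure_pmf.prob (Om (Dk n k)) {\<omega>. \<not> (\<forall>i<r. \<omega> (e v j i) = c v j i)})"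
        by (rule prob_Om_indep_all[OF finite_Dk finite_lessThan _ dj])
           (use eD[OF v] local_not_agree in auto)
      moreover have "{\<omega>. Q v \<omega>} = {\<omega>. \<forall>j\<in>{..<d}. \<not> (\<forall>i<r. \<omega> (e v j i) = c v j i)}"
        unfolding Q_def by auto
      ultimately show ?thesis by simp
    qed
    also have "\<dots> = (\<Prod>j\<in>{..<d}. 1 - (1/2) ^ r)"
    proof (rule prod.cong[OF refl])
      fix j assume j: "j \<in> {..<d}"
      have inj: "inj_on (e v j) {..<r}"
      proof (rule inj_onI)
        fix i i' assume ii: "i \<in> {..<r}" "i' \<in> {..<r}" "e v j i = e v j i'"
        have a: "ps ! j ! i \<in> set (ps ! j)" "ps ! j ! i' \<in> set (ps ! j)" using pj j ii by auto
        have jd: "j < d" using j by simp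
        have "ps ! j ! i = ps ! j ! i'"
          by (rule ekey_inj[OF fne[OF jd a(1)] fne[OF jd a(2)] ii(3)[unfolded e_def]])
        then show "i = i'" using pj j ii by (simp add: nth_eq_iff_index_eq)
      qed
      have jd: "j < d" using j by simp
      show "measure_pmf.prob (Om (Dk n k)) {\<omega>. \<not> (\<forall>i<r. \<omega> (e v j i) = c v j i)} = 1 - (1/2) ^ r"
        by (simp only: prob_not prob_Om_agree_idx[OF finite_Dk inj eD[OF v jd]])
    qed
    also have "\<dots> = (1 - 1/2^r) ^ d" by (simp add: power_one_over)
    finally show ?thesis by simp
  qed
  have neJ: "?J \<noteq> {}" using n by (auto simp: cls_def)
  have cJ: "card ?J = n" by simp
  have hb: "measure_pmf.prob (Om (Dk n k)) {\<omega>. (1 - 1/2^r) ^ d * card ?J + real n powr (2/3) \<le> real (card {v\<in>?J. Q v \<omega>})}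
     \<le> exp (- 2 * (real n powr (2/3))\<^sup>2 / card ?J)"
    by (rule hoeff_upper[OF finite_Dk finite_cls neJ KD dK loc pQ]) auto
  have hs: "{\<omega>. real (card (I_set n (tour n k \<omega>) Ws ps t)) > real n * (1 - 1/2^r) ^ d + real n powr (2/3)}
     \<subseteq> {\<omega>. (1 - 1/2^r) ^ d * card ?J + real n powr (2/3) \<le> real (card {v\<in>?J. Q v \<omega>})}"
    using Ieq by (auto simp: cJ mult.commute)
  have "- 2 * (real n powr (2/3))\<^sup>2 / card ?J = - 2 * real n powr (1/3)"
    using powr_sq_div[of "real n"] n by (simp add: cJ)
  then show ?thesis using pmf_prob_mono_le[OF hs hb] by simp
qed

lemma P4_single:
  assumes s: "1 \<le> s" "s \<le> k" and l: "1 \<le> l" "l \<le> k" and sl: "s \<noteq> l" and n: "0 < n"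
    and vs: "distinct vs" "set vs \<subseteq> cls n l" and D: "length D = length vs"
  shows "measure_pmf.prob (Om (Dk n k))
     {\<omega>. real (card (C_D (tour n k \<omega>) D vs \<inter> cls n s)) > real n * (1/2) ^ length vs + real n powr (2/3)}
     \<le> exp (- 2 * real n powr (1/3))"
proof -
  define q where "q = length vs"
  define e where "e w j = ekey w (vs ! j)" for w :: "nat \<times> nat" and j
  define c where "c w j = (D ! j = (fst (vs ! j) < fst w))" for w :: "nat \<times> nat" and j
  define Q where "Q w \<omega> = (\<forall>j<q. \<omega> (e w j) = c w j)" for w \<omega>
  define K where "K w = e w ` {..<q}" for w
  let ?J = "cls n s"
  have wV: "\<And>w. w \<in> ?J \<Longrightarrow> w \<in> Vset n k \<and> fst w = s" using s by (auto simp: cls_def Vset_def)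
  have aV: "\<And>j. j < q \<Longrightarrow> vs ! j \<in> Vset n k \<and> fst (vs ! j) = l"
  proof -
    fix j assume "j < q"
    then have "vs ! j \<in> cls n l" using vs nth_mem unfolding q_def by blast
    then show "vs ! j \<in> Vset n k \<and> fst (vs ! j) = l" using l by (auto simp: cls_def Vset_def)
  qed
  have fne: "\<And>w j. w \<in> ?J \<Longrightarrow> j < q \<Longrightarrow> fst w \<noteq> fst (vs ! j)" using wV aV sl by metis
  have Ceq: "w \<in> C_D (tour n k \<omega>) D vs \<longleftrightarrow> Q w \<omega>" if w: "w \<in> ?J" for w \<omega>
  proof -
    have "((D ! j \<longrightarrow> (vs ! j, w) \<in> tour n k \<omega>) \<and> (\<not> D ! j \<longrightarrow> (w, vs ! j) \<in> tour n k \<omega>))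
        \<longleftrightarrow> \<omega> (e w j) = c w j" if j: "j < q" for j
    proof -
      have f: "fst w \<noteq> fst (vs ! j)" by (rule fne[OF w j])
      have m1: "(vs ! j, w) \<in> tour n k \<omega> \<longleftrightarrow> \<omega> (e w j) = (fst (vs ! j) < fst w)"
        using mem_tour[of "vs ! j" n k w \<omega>] aV[OF j] wV[OF w] f ekey_sym[of "vs ! j" w]
        by (simp add: e_def)
      have m2: "(w, vs ! j) \<in> tour n k \<omega> \<longleftrightarrow> \<omega> (e w j) = (fst w < fst (vs ! j))"
        using mem_tour[of w n k "vs ! j" \<omega>] aV[OF j] wV[OF w] f by (simp add: e_def)
      have "(fst w < fst (vs ! j)) = (\<not> fst (vs ! j) < fst w)" using f by auto
      then show ?thesis using m1 m2 by (cases "D ! j") (auto simp: c_def)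
    qed
    then show ?thesis unfolding C_D_def Q_def q_def by auto
  qed
  have Ceq2: "C_D (tour n k \<omega>) D vs \<inter> cls n s = {w \<in> ?J. Q w \<omega>}" for \<omega>
    using Ceq by auto
  have KD: "K w \<subseteq> Dk n k" if w: "w \<in> ?J" for w
  proof
    fix x assume "x \<in> K w"
    then obtain j where j: "j < q" "x = e w j" by (auto simp: K_def)
    show "x \<in> Dk n k" unfolding j e_def
      by (rule ekey_in_Dk) (use wV[OF w] aV[OF j(1)] fne[OF w j(1)] in auto)
  qed
  have loc: "local_to (K w) (Q w)" for w unfolding K_def Q_def by (rule local_agree)
  have dK: "disjoint_family_on K ?J"
    unfolding disjoint_family_on_def
  proof (intro ballI impI)
    fix w w' assume ww: "w \<in> ?J" "w' \<in> ?J" "w \<noteq> w'"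
    show "K w \<inter> K w' = {}"
    proof (rule ccontr)
      assume "K w \<inter> K w' \<noteq> {}"
      then obtain x where x: "x \<in> K w" "x \<in> K w'" by blast
      from x(1) obtain j where j: "j < q" "x = e w j" unfolding K_def by blast
      from x(2) obtain j' where j': "j' < q" "x = e w' j'" unfolding K_def by blast
      have "ekey w (vs ! j) = ekey w' (vs ! j')" using j j' by (simp add: e_def)
      from ekey_eq_cases[OF this] show False
      proof
        assume "w = w' \<and> vs ! j = vs ! j'" then show False using ww by simp
      next
        assume "w = vs ! j' \<and> vs ! j = w'"
        then show False using wV[OF ww(1)] aV[OF j'(1)] sl by auto
      qed
    qed
  qed
  have pQ: "measure_pmf.prob (Om (Dk n k)) {\<omega>. Q w \<omega>} \<le> (1/2) ^ q" if w: "w \<in> ?J" for w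
  proof -
    have inj: "inj_on (e w) {..<q}"
    proof (rule inj_onI)
      fix j j' assume jj: "j \<in> {..<q}" "j' \<in> {..<q}" "e w j = e w j'"
      have "vs ! j = vs ! j'"
        by (rule ekey_inj[OF fne[OF w] fne[OF w] jj(3)[unfolded e_def]]) (use jj in auto)
      then show "j = j'" using vs(1) jj by (simp add: nth_eq_iff_index_eq q_def)
    qed
    have "e w ` {..<q} \<subseteq> Dk n k" using KD[OF w] by (simp add: K_def)
    then show ?thesis unfolding Q_def using prob_Om_agree_idx[OF finite_Dk inj] by simp
  qed
  have neJ: "?J \<noteq> {}" using n by (auto simp: cls_def)
  have cJ: "card ?J = n" by simp
  have hb: "measure_pmf.prob (Om (Dk n k)) {\<omega>. (1/2) ^ q * card ?J + real n powr (2/3) \<le> real (card {w\<in>?J. Q w \<omega>})}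
     \<le> exp (- 2 * (real n powr (2/3))\<^sup>2 / card ?J)"
    by (rule hoeff_upper[OF finite_Dk finite_cls neJ KD dK loc pQ]) auto
  have hs: "{\<omega>. real (card (C_D (tour n k \<omega>) D vs \<inter> cls n s)) > real n * (1/2) ^ length vs + real n powr (2/3)}
     \<subseteq> {\<omega>. (1/2) ^ q * card ?J + real n powr (2/3) \<le> real (card {w\<in>?J. Q w \<omega>})}"
    using Ceq2 by (auto simp: cJ mult.commute q_def)
  have "- 2 * (real n powr (2/3))\<^sup>2 / card ?J = - 2 * real n powr (1/3)"
    using powr_sq_div[of "real n"] n by (simp add: cJ)
  then show ?thesis using pmf_prob_mono_le[OF hs hb] by simp
qed

lemma P4_same:
  assumes E: "E \<subseteq> cross_pairs n k" and vs: "set vs \<subseteq> cls n s"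
  shows "real (card (C_D E D vs \<inter> cls n s)) \<le> real n * (1/2) ^ length vs + real n powr (2/3)"
proof (cases vs)
  case Nil
  then show ?thesis by (simp add: C_D_def)
next
  case (Cons a as)
  have "C_D E D vs \<inter> cls n s = {}"
  proof (rule ccontr)
    assume "C_D E D vs \<inter> cls n s \<noteq> {}"
    then obtain w where w: "w \<in> C_D E D vs" "w \<in> cls n s" by blast
    have a: "a \<in> cls n s" using vs Cons by auto
    from w(1) have "(D ! 0 \<longrightarrow> (a, w) \<in> E) \<and> (\<not> D ! 0 \<longrightarrow> (w, a) \<in> E)"
      unfolding C_D_def using Cons by fastforce
    then have "(a, w) \<in> E \<or> (w, a) \<in> E" by blast
    then show False using E w(2) a by (auto simp: cross_pairs_def cls_def)
  qed
  then show ?thesis by simp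
qed

lemma tour_sub: "tour n k \<omega> \<subseteq> cross_pairs n k"
  by (auto simp: tour_def)

lemma sum_pow_bound: "(\<Sum>i\<le>m. (x::nat) ^ i) \<le> (m + 1) * (x + 1) ^ m"
proof -
  have "(\<Sum>i\<le>m. x ^ i) \<le> (\<Sum>i\<le>m. (x + 1) ^ m)"
  proof (rule sum_mono)
    fix i assume "i \<in> {..m}"
    then have "x ^ i \<le> (x + 1) ^ i" "(x + 1) ^ i \<le> (x + 1) ^ m"
      by (auto intro: power_mono power_increasing)
    then show "x ^ i \<le> (x + 1) ^ m" by linarith
  qed
  then show ?thesis by simp
qed

definition Bn :: "nat \<Rightarrow> nat \<Rightarrow> nat \<Rightarrow> nat" where
  "Bn k d n = (k + 2) * (d + 2) * 3 ^ (k + d) * (n + 1)"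

lemma Bn_ge:
  fixes k d n :: nat
  shows "k \<le> Bn k d n" "k * n + 1 \<le> Bn k d n" "k + 1 \<le> Bn k d n" "d + 1 \<le> Bn k d n"
    "(k + 1) * 3 ^ k \<le> Bn k d n" "(d + 1) * 3 ^ d \<le> Bn k d n" "0 < Bn k d n"
proof -
  have p: "1 \<le> (3::nat) ^ (k + d)" by simp
  have a: "(k + 2) * (n + 1) \<le> Bn k d n"
  proof -
    have p2: "1 \<le> (d + 2) * 3 ^ (k + d)" by (simp add: Suc_le_eq)
    have "(k + 2) * (n + 1) * 1 \<le> (k + 2) * (n + 1) * ((d + 2) * 3 ^ (k + d))"
      using p2 by (intro mult_le_mono) auto
    moreover have "Bn k d n = (k + 2) * (n + 1) * ((d + 2) * 3 ^ (k + d))" by (simp only: Bn_def mult_ac)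
    ultimately show ?thesis by simp
  qed
  then show "k \<le> Bn k d n" "k * n + 1 \<le> Bn k d n" "k + 1 \<le> Bn k d n"
    by (auto simp: algebra_simps)
  have b: "(k + 2) * 3 ^ k * 1 \<le> Bn k d n"
  proof -
    have "(3::nat) ^ k \<le> 3 ^ (k + d)" by (intro power_increasing) auto
    then have "(k + 2) * 3 ^ k * 1 \<le> (k + 2) * 3 ^ (k + d) * ((d + 2) * (n + 1))"
      by (intro mult_le_mono) auto
    moreover have "Bn k d n = (k + 2) * 3 ^ (k + d) * ((d + 2) * (n + 1))" by (simp only: Bn_def mult_ac)
    ultimately show ?thesis by simp
  qed
  moreover have "(k + 1) * 3 ^ k \<le> (k + 2) * 3 ^ k" by (intro mult_le_mono1) simp
  ultimately show "(k + 1) * 3 ^ k \<le> Bn k d n" by simp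
  have c: "(d + 2) * 3 ^ d * 1 \<le> Bn k d n"
  proof -
    have "(3::nat) ^ d \<le> 3 ^ (k + d)" by (intro power_increasing) auto
    then have "(d + 2) * 3 ^ d * 1 \<le> (d + 2) * 3 ^ (k + d) * ((k + 2) * (n + 1))"
      by (intro mult_le_mono) auto
    moreover have "Bn k d n = (d + 2) * 3 ^ (k + d) * ((k + 2) * (n + 1))" by (simp only: Bn_def mult_ac)
    ultimately show ?thesis by simp
  qed
  moreover have "(d + 1) * 3 ^ d \<le> (d + 2) * 3 ^ d" by (intro mult_le_mono1) simp
  ultimately show "(d + 1) * 3 ^ d \<le> Bn k d n" by simp
  have "(d + 2) * 1 \<le> (d + 2) * 3 ^ d" by (intro mult_le_mono2) simp
  then show "d + 1 \<le> Bn k d n" using c by simp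
  show "0 < Bn k d n" by (simp add: Bn_def)
qed

lemma card_BL: "card {W :: bool list. set W \<subseteq> UNIV \<and> length W \<le> m} \<le> (m + 1) * 3 ^ m"
proof -
  have "card {W :: bool list. set W \<subseteq> UNIV \<and> length W \<le> m} = (\<Sum>i\<le>m. 2 ^ i)"
    using card_lists_length_le[of "UNIV :: bool set" m] by simp
  also have "\<dots> \<le> (m + 1) * (2 + 1) ^ m" by (rule sum_pow_bound)
  finally show ?thesis by simp
qed

lemma finite_BL: "finite {W :: bool list. set W \<subseteq> UNIV \<and> length W \<le> m}"
  by (rule finite_lists_length_le) simp

lemma whp_from_bound:
  fixes f :: "nat \<Rightarrow> real"
  assumes "\<And>n. 0 \<le> f n" "\<And>n. 0 < n \<Longrightarrow> f n \<le> real (Bn k d n ^ m) * exp (- 2 * real n powr (1/3))"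
  shows "f \<longlonglongrightarrow> 0"
proof (rule tendsto_sandwich[where f="\<lambda>_. 0"])
  define P where "P = real ((k + 2) * (d + 2) * 3 ^ (k + d))"
  have "0 < (k + 2) * (d + 2) * 3 ^ (k + d)" by simp
  then have P: "P > 0" by (simp only: P_def of_nat_0_less_iff)
  show "\<forall>\<^sub>F n in sequentially. 0 \<le> f n" using assms(1) by simp
  show "\<forall>\<^sub>F n in sequentially. f n \<le> exp (real m * ln (P * (real n + 1)) - 2 * real n powr (1/3))"
  proof (rule eventually_mono[OF eventually_gt_at_top[of 0]])
    fix n :: nat assume n: "0 < n"
    have "f n \<le> real (Bn k d n ^ m) * exp (- 2 * real n powr (1/3))" by (rule assms(2)[OF n])
    also have "\<dots> = exp (real m * ln (real (Bn k d n)) + - 2 * real n powr (1/3))"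
      by (rule exp_pow_bound) (simp add: Bn_def)
    also have "real (Bn k d n) = P * (real n + 1)"
    proof -
      have "real (Bn k d n) = P * real (n + 1)" by (simp only: Bn_def P_def of_nat_mult)
      then show ?thesis by simp
    qed
    finally show "f n \<le> exp (real m * ln (P * (real n + 1)) - 2 * real n powr (1/3))" by simp
  qed
  show "(\<lambda>_. 0) \<longlonglongrightarrow> (0::real)" by simp
  show "(\<lambda>n. exp (real m * ln (P * (real n + 1)) - 2 * real n powr (1/3))) \<longlonglongrightarrow> 0"
    using P by real_asymp
qed

lemma P3_bound:
  assumes n: "0 < n"
  shows "measure_pmf.prob (Om (Dk n k)) {\<omega>. \<not> prop3 n k d (tour n k \<omega>)}
     \<le> real (Bn k d n ^ (2 + d + (k + 1) * d)) * exp (- 2 * real n powr (1/3))"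
proof -
  define BL where "BL = {W :: bool list. set W \<subseteq> UNIV \<and> length W \<le> k}"
  define Lk where "Lk = {p. set p \<subseteq> Vset n k \<and> length p \<le> k}"
  define WL where "WL = {Ws. set Ws \<subseteq> BL \<and> length Ws = d}"
  define PL where "PL = {ps. set ps \<subseteq> Lk \<and> length ps = d}"
  define I where "I = {1..k} \<times> {1..k} \<times> WL \<times> PL"
  define A where "A = (\<lambda>(r, t, Ws, ps). {\<omega>. 1 \<le> r \<and> r < k \<and> r < t \<and> t \<le> k
      \<and> length Ws = d \<and> (\<forall>W \<in> set Ws. length W = r)
      \<and> length ps = d \<and> (\<forall>p \<in> set ps. rtuple n r p)
      \<and> (\<forall>j<d. \<forall>j'<d. j \<noteq> j' \<longrightarrow> set (ps ! j) \<inter> set (ps ! j') = {})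
      \<and> real (card (I_set n (tour n k \<omega>) Ws ps t)) > real n * (1 - 1/2^r) ^ d + real n powr (2/3)})"
  have fBL: "finite BL" unfolding BL_def by (rule finite_BL)
  have fLk: "finite Lk" unfolding Lk_def by (rule finite_lists_length_le) simp
  have fWL: "finite WL" unfolding WL_def by (rule finite_lists_length_eq[OF fBL])
  have fPL: "finite PL" unfolding PL_def by (rule finite_lists_length_eq[OF fLk])
  have fI: "finite I" unfolding I_def using fWL fPL by simp
  have Abound: "measure_pmf.prob (Om (Dk n k)) (A i) \<le> exp (- 2 * real n powr (1/3))" if "i \<in> I" for i
  proof -
    obtain r t Ws ps where i: "i = (r, t, Ws, ps)" by (cases i) auto
    show ?thesis
    proof (cases "1 \<le> r \<and> r < k \<and> r < t \<and> t \<le> k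
      \<and> length Ws = d \<and> (\<forall>W \<in> set Ws. length W = r)
      \<and> length ps = d \<and> (\<forall>p \<in> set ps. rtuple n r p)
      \<and> (\<forall>j<d. \<forall>j'<d. j \<noteq> j' \<longrightarrow> set (ps ! j) \<inter> set (ps ! j') = {})")
      case True
      then have h: "1 \<le> r" "r < t" "t \<le> k" "length Ws = d" "\<forall>W \<in> set Ws. length W = r"
        "length ps = d" "\<forall>p \<in> set ps. rtuple n r p"
        "\<forall>j<d. \<forall>j'<d. j \<noteq> j' \<longrightarrow> set (ps ! j) \<inter> set (ps ! j') = {}" by auto
      have "A i \<subseteq> {\<omega>. real (card (I_set n (tour n k \<omega>) Ws ps t)) > real n * (1 - 1/2^r) ^ d + real n powr (2/3)}"
        by (auto simp: A_def i)
      then show ?thesis by (rule pmf_prob_mono_le) (rule P3_single[OF h(1,2,3) n h(4,5,6,7,8)])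
    next
      case False
      then have "A i = {}" by (auto simp: A_def i)
      then show ?thesis by simp
    qed
  qed
  have cover: "{\<omega>. \<not> prop3 n k d (tour n k \<omega>)} \<subseteq> (\<Union>i\<in>I. A i)"
  proof
    fix \<omega> assume "\<omega> \<in> {\<omega>. \<not> prop3 n k d (tour n k \<omega>)}"
    then obtain r t Ws ps where h: "1 \<le> r" "r < k" "r < t" "t \<le> k"
      "length Ws = d" "\<forall>W \<in> set Ws. length W = r" "length ps = d" "\<forall>p \<in> set ps. rtuple n r p"
      "\<forall>j<d. \<forall>j'<d. j \<noteq> j' \<longrightarrow> set (ps ! j) \<inter> set (ps ! j') = {}"
      "\<not> real (card (I_set n (tour n k \<omega>) Ws ps t)) \<le> real n * (1 - 1/2^r) ^ d + real n powr (2/3)"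
      unfolding prop3_def by blast
    have "\<omega> \<in> A (r, t, Ws, ps)" using h by (auto simp: A_def)
    moreover have "Ws \<in> WL" using h unfolding WL_def BL_def by auto
    moreover have "ps \<in> PL"
    proof -
      have "p \<in> Lk" if p: "p \<in> set ps" for p
      proof -
        have rt: "rtuple n r p" using h p by auto
        have "set p \<subseteq> Vset n k" using rtuple_props(2)[OF rt h(2)] by blast
        moreover have "length p \<le> k" using rt h by (simp add: rtuple_def)
        ultimately show ?thesis by (simp add: Lk_def)
      qed
      then show ?thesis using h by (auto simp: PL_def)
    qed
    moreover have "(r, t) \<in> {1..k} \<times> {1..k}" using h by auto
    ultimately show "\<omega> \<in> (\<Union>i\<in>I. A i)" unfolding I_def by blast
  qed
  have P1: "measure_pmf.prob (Om (Dk n k)) {\<omega>. \<not> prop3 n k d (tour n k \<omega>)} \<le> real (card I) * exp (- 2 * real n powr (1/3))"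
    by (rule prob_union_le[OF fI Abound cover])
  have "card I \<le> Bn k d n ^ (2 + d + (k + 1) * d)"
  proof -
    have cI: "card I = k * k * card BL ^ d * card Lk ^ d"
      unfolding I_def WL_def PL_def
      by (simp add: card_cartesian_product card_lists_length_eq[OF fBL] card_lists_length_eq[OF fLk])
    have b1: "card BL \<le> Bn k d n" unfolding BL_def using card_BL[of k] Bn_ge(5)[where k=k and d=d and n=n] by linarith
    have b2: "card Lk \<le> Bn k d n ^ (k + 1)"
    proof -
      have "card Lk \<le> (k + 1) * (k * n + 1) ^ k" unfolding Lk_def by (rule card_Lk_le)
      also have "\<dots> \<le> Bn k d n * Bn k d n ^ k"
        using Bn_ge(2,3)[where k=k and d=d and n=n] by (intro mult_le_mono power_mono) auto
      finally show ?thesis by simp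
    qed
    have "card I \<le> Bn k d n * Bn k d n * Bn k d n ^ d * (Bn k d n ^ (k + 1)) ^ d"
      unfolding cI using Bn_ge(1)[where k=k and d=d and n=n] b1 b2 by (intro mult_le_mono power_mono) auto
    also have "\<dots> = Bn k d n ^ (2 + d + (k + 1) * d)"
    proof -
      define B where "B = Bn k d n"
      have "B ^ (2 + d + (k + 1) * d) = B ^ 2 * B ^ d * B ^ ((k + 1) * d)" by (simp only: power_add)
      also have "\<dots> = B * B * B ^ d * (B ^ (k + 1)) ^ d" by (simp only: power2_eq_square power_mult)
      finally show ?thesis by (simp only: B_def)
    qed
    finally show ?thesis .
  qed
  then have "real (card I) \<le> real (Bn k d n ^ (2 + d + (k + 1) * d))" by (simp only: of_nat_le_iff)
  then have "real (card I) * exp (- 2 * real n powr (1/3)) \<le> real (Bn k d n ^ (2 + d + (k + 1) * d)) * exp (- 2 * real n powr (1/3))"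
    by (rule mult_right_mono) simp
  with P1 show ?thesis by (rule order_trans)
qed

lemma P4_bound:
  assumes n: "0 < n"
  shows "measure_pmf.prob (Om (Dk n k)) {\<omega>. \<not> prop4 n k d (tour n k \<omega>)}
     \<le> real (Bn k d n ^ (d + 4)) * exp (- 2 * real n powr (1/3))"
proof -
  define VL where "VL = {vs. set vs \<subseteq> Vset n k \<and> length vs \<le> d}"
  define DL where "DL = {D :: bool list. set D \<subseteq> UNIV \<and> length D \<le> d}"
  define I where "I = {1..k} \<times> {1..k} \<times> VL \<times> DL"
  define A where "A = (\<lambda>(s, l, vs, D). {\<omega>. 1 \<le> s \<and> s \<le> k \<and> 1 \<le> l \<and> l \<le> k \<and> s \<noteq> l
      \<and> distinct vs \<and> set vs \<subseteq> cls n l \<and> length D = length vs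
      \<and> real (card (C_D (tour n k \<omega>) D vs \<inter> cls n s)) > real n * (1/2) ^ length vs + real n powr (2/3)})"
  have fVL: "finite VL" unfolding VL_def by (rule finite_lists_length_le) simp
  have fDL: "finite DL" unfolding DL_def by (rule finite_BL)
  have fI: "finite I" unfolding I_def using fVL fDL by simp
  have Abound: "measure_pmf.prob (Om (Dk n k)) (A i) \<le> exp (- 2 * real n powr (1/3))" if "i \<in> I" for i
  proof -
    obtain s l vs D where i: "i = (s, l, vs, D)" by (cases i) auto
    show ?thesis
    proof (cases "1 \<le> s \<and> s \<le> k \<and> 1 \<le> l \<and> l \<le> k \<and> s \<noteq> l
      \<and> distinct vs \<and> set vs \<subseteq> cls n l \<and> length D = length vs")
      case True
      then have h: "1 \<le> s" "s \<le> k" "1 \<le> l" "l \<le> k" "s \<noteq> l" "distinct vs" "set vs \<subseteq> cls n l"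
        "length D = length vs" by auto
      have "A i \<subseteq> {\<omega>. real (card (C_D (tour n k \<omega>) D vs \<inter> cls n s)) > real n * (1/2) ^ length vs + real n powr (2/3)}"
        by (auto simp: A_def i)
      then show ?thesis by (rule pmf_prob_mono_le) (rule P4_single[OF h(1-5) n h(6-8)])
    next
      case False
      then have "A i = {}" by (auto simp: A_def i)
      then show ?thesis by simp
    qed
  qed
  have cover: "{\<omega>. \<not> prop4 n k d (tour n k \<omega>)} \<subseteq> (\<Union>i\<in>I. A i)"
  proof
    fix \<omega> assume "\<omega> \<in> {\<omega>. \<not> prop4 n k d (tour n k \<omega>)}"
    then obtain s l vs D where h: "1 \<le> s" "s \<le> k" "1 \<le> l" "l \<le> k"
      "length vs \<le> d" "distinct vs" "set vs \<subseteq> cls n l" "length D = length vs"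
      "\<not> real (card (C_D (tour n k \<omega>) D vs \<inter> cls n s)) \<le> real n * (1/2) ^ length vs + real n powr (2/3)"
      unfolding prop4_def by blast
    have sl: "s \<noteq> l"
    proof
      assume "s = l"
      then show False using P4_same[OF tour_sub, of vs n s k \<omega> D] h by auto
    qed
    have "\<omega> \<in> A (s, l, vs, D)" using h sl by (auto simp: A_def)
    moreover have "vs \<in> VL" using h cls_sub_Vset[OF h(3,4)] unfolding VL_def by auto
    moreover have "D \<in> DL" using h unfolding DL_def by auto
    moreover have "(s, l) \<in> {1..k} \<times> {1..k}" using h by auto
    ultimately show "\<omega> \<in> (\<Union>i\<in>I. A i)" unfolding I_def by blast
  qed
  have P1: "measure_pmf.prob (Om (Dk n k)) {\<omega>. \<not> prop4 n k d (tour n k \<omega>)} \<le> real (card I) * exp (- 2 * real n powr (1/3))"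
    by (rule prob_union_le[OF fI Abound cover])
  have "card I \<le> Bn k d n ^ (d + 4)"
  proof -
    have cI: "card I = k * k * card VL * card DL"
      unfolding I_def by (simp add: card_cartesian_product)
    have b1: "card DL \<le> Bn k d n" unfolding DL_def using card_BL[of d] Bn_ge(6)[where k=k and d=d and n=n] by linarith
    have b2: "card VL \<le> Bn k d n ^ (d + 1)"
    proof -
      have "card VL = (\<Sum>i\<le>d. (k * n) ^ i)" unfolding VL_def by (simp add: card_lists_length_le card_Vset)
      also have "\<dots> \<le> (d + 1) * (k * n + 1) ^ d" by (rule sum_pow_bound)
      also have "\<dots> \<le> Bn k d n * Bn k d n ^ d"
        using Bn_ge(2,4)[where k=k and d=d and n=n] by (intro mult_le_mono power_mono) auto
      finally show ?thesis by simp
    qed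
    have "card I \<le> Bn k d n * Bn k d n * Bn k d n ^ (d + 1) * Bn k d n"
      unfolding cI using Bn_ge(1)[where k=k and d=d and n=n] b1 b2 by (intro mult_le_mono) auto
    also have "\<dots> = Bn k d n ^ (d + 4)"
    proof -
      define B where "B = Bn k d n"
      have "B ^ (d + 4) = B ^ ((d + 1) + 3)" by (rule arg_cong[where f="\<lambda>e. B ^ e"]) simp
      also have "\<dots> = B ^ (d + 1) * B ^ 3" by (simp only: power_add)
      also have "B ^ 3 = B * B * B" by (simp add: numeral_3_eq_3)
      finally show ?thesis by (simp add: B_def mult_ac)
    qed
    finally show ?thesis .
  qed
  then have "real (card I) \<le> real (Bn k d n ^ (d + 4))" by (simp only: of_nat_le_iff)
  then have "real (card I) * exp (- 2 * real n powr (1/3)) \<le> real (Bn k d n ^ (d + 4)) * exp (- 2 * real n powr (1/3))"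
    by (rule mult_right_mono) simp
  with P1 show ?thesis by (rule order_trans)
qed

lemma prob_union2: "measure_pmf.prob M (A \<union> B) \<le> measure_pmf.prob M A + measure_pmf.prob M B"
  by (rule measure_Un_le) auto

theorem lemma4p10:
  fixes k d :: nat and \<epsilon> :: real
  assumes "k \<ge> 2" and "d > 0" and "\<epsilon> > 0"
  shows "(\<lambda>n. real (card {E \<in> tournaments n k. good n k d \<epsilon> E})
                / real (card (tournaments n k))) \<longlonglongrightarrow> 1"
proof -
  have k: "2 \<le> k" and k1: "1 \<le> k" using assms(1) by auto
  define \<gamma> :: real where "\<gamma> = 1 / (4 * real k ^ 2)"
  define \<delta> :: real where "\<delta> = 1 / (72 * real k ^ 2 * 2 ^ k)"
  have \<gamma>: "\<gamma> > 0" using k by (simp add: \<gamma>_def)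
  have \<delta>: "\<delta> > 0" using k by (simp add: \<delta>_def)
  define a1 where "a1 n = measure_pmf.prob (Om (Dk n k)) {\<omega>. \<not> L1 n k (1/2) \<epsilon> (tour n k \<omega>)}" for n
  define a2 where "a2 n = measure_pmf.prob (Om (Dk n k)) {\<omega>. \<not> L1 n k \<gamma> \<delta> (tour n k \<omega>)}" for n
  define a3 where "a3 n = measure_pmf.prob (Om (Dk n k)) {\<omega>. \<not> prop3 n k d (tour n k \<omega>)}" for n
  define a4 where "a4 n = measure_pmf.prob (Om (Dk n k)) {\<omega>. \<not> prop4 n k d (tour n k \<omega>)}" for n
  have t1: "a1 \<longlonglongrightarrow> 0" unfolding a1_def by (rule L1_whp) (use assms k1 in auto)
  have t2: "a2 \<longlonglongrightarrow> 0" unfolding a2_def by (rule L1_whp[OF \<gamma> \<delta> k1])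
  have t3: "a3 \<longlonglongrightarrow> 0" unfolding a3_def
    by (rule whp_from_bound[where k=k and d=d and m="2 + d + (k + 1) * d"], simp, rule P3_bound, assumption)
  have t4: "a4 \<longlonglongrightarrow> 0" unfolding a4_def
    by (rule whp_from_bound[where k=k and d=d and m="d + 4"], simp, rule P4_bound, assumption)
  have tsum: "(\<lambda>n. 1 - (a1 n + a2 n + a3 n + a4 n)) \<longlonglongrightarrow> 1 - (0 + 0 + 0 + 0)"
    by (intro tendsto_intros t1 t2 t3 t4)
  show ?thesis
  proof (rule tendsto_sandwich[where f="\<lambda>n. 1 - (a1 n + a2 n + a3 n + a4 n)" and h="\<lambda>_. 1"])
    show "\<forall>\<^sub>F n in sequentially. 1 - (a1 n + a2 n + a3 n + a4 n) \<le>
        real (card {E \<in> tournaments n k. good n k d \<epsilon> E}) / real (card (tournaments n k))"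
    proof (rule eventually_mono[OF eventually_gt_at_top[of 0]])
      fix n :: nat assume n: "0 < n"
      let ?M = "Om (Dk n k)"
      have sub: "{\<omega>. \<not> good n k d \<epsilon> (tour n k \<omega>)} \<subseteq>
         (({\<omega>. \<not> L1 n k (1/2) \<epsilon> (tour n k \<omega>)} \<union> {\<omega>. \<not> L1 n k \<gamma> \<delta> (tour n k \<omega>)}) \<union>
          {\<omega>. \<not> prop3 n k d (tour n k \<omega>)}) \<union> {\<omega>. \<not> prop4 n k d (tour n k \<omega>)}"
        using L1_prop1 L1_prop2[OF k n, of "tour n k _"] unfolding good_def \<gamma>_def \<delta>_def by blast
      have "measure_pmf.prob ?M {\<omega>. \<not> good n k d \<epsilon> (tour n k \<omega>)} \<le> a1 n + a2 n + a3 n + a4 n"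
      proof -
        have "measure_pmf.prob ?M {\<omega>. \<not> good n k d \<epsilon> (tour n k \<omega>)} \<le>
          measure_pmf.prob ?M ((({\<omega>. \<not> L1 n k (1/2) \<epsilon> (tour n k \<omega>)} \<union> {\<omega>. \<not> L1 n k \<gamma> \<delta> (tour n k \<omega>)}) \<union>
          {\<omega>. \<not> prop3 n k d (tour n k \<omega>)}) \<union> {\<omega>. \<not> prop4 n k d (tour n k \<omega>)})"
          using sub by (intro measure_pmf.finite_measure_mono) auto
        also have "\<dots> \<le> a1 n + a2 n + a3 n + a4 n"
          unfolding a1_def a2_def a3_def a4_def
          by (smt (verit) prob_union2)
        finally show ?thesis .
      qed
      moreover have "measure_pmf.prob ?M {\<omega>. good n k d \<epsilon> (tour n k \<omega>)} = 1 - measure_pmf.prob ?M {\<omega>. \<not> good n k d \<epsilon> (tour n k \<omega>)}"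
        using prob_not[of ?M "\<lambda>\<omega>. good n k d \<epsilon> (tour n k \<omega>)"] by simp
      ultimately show "1 - (a1 n + a2 n + a3 n + a4 n) \<le>
        real (card {E \<in> tournaments n k. good n k d \<epsilon> E}) / real (card (tournaments n k))"
        by (simp add: frac_eq_prob)
    qed
    show "\<forall>\<^sub>F n in sequentially. real (card {E \<in> tournaments n k. good n k d \<epsilon> E}) / real (card (tournaments n k)) \<le> 1"
      by (simp add: frac_eq_prob)
    show "(\<lambda>n. 1 - (a1 n + a2 n + a3 n + a4 n)) \<longlonglongrightarrow> 1" using tsum by simp
    show "(\<lambda>_. 1) \<longlonglongrightarrow> (1::real)" by simp
  qed
qed


end
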